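(* Let $\mathcal H$ be an infinite-dimensional complex Hilbert space and $D\subseteq\mathcal H$ a dense linear subspace. Let $\mathcal V_{fD}(\mathcal H)=\{t\in\mathcal V_f(\mathcal H)\mid t\text{ is bounded, or }D(t)=D\}$. Then $\mathcal V_{fD}(\mathcal H)$ is a sub-generalized effect algebra of $(\mathcal V_f(\mathcal H);\oplus,o)$, the operation $\oplus_{|\mathcal V_{fD}(\mathcal H)}$ is total, and $(\mathcal V_{fD}(\mathcal H);\oplus_{|\mathcal V_{fD}(\mathcal H)},o)$ is monotone Dedekind upwards and downwards $\sigma$-complete.
   Context: Bilinear forms $t$ on $\mathcal H$ are sesquilinear maps $D(t)\times D(t)\to\mathbb C$ on a dense linear subspace $D(t)$ (linear in the first argument); $t$ is positive if $t(x,x)\ge0$ on $D(t)$, bounded if $\sup\{t(x,x)\mid x\in D(t),\|x\|=1\}<\infty$. The sum $t+s$ has domain $D(t)\cap D(s)$. $o$ is the zero form on $\mathcal H$. $\mathcal V_f(\mathcal H)$ is the set of positive bilinear forms with dense domain such that $D(t)=\mathcal H$ whenever $t$ is bounded; $t\oplus s$ is defined iff $t$ or $s$ is bounded or $D(t)=D(s)$, and then $t\oplus s=t+s$; it is a generalized effect algebra. A subset $Q$ of a generalized effect algebra $(E;\oplus,0)$ is a sub-generalized effect algebra if $0\in Q$ and whenever $x\oplus y=z$ in $E$ with two of $x,y,z$ in $Q$, all three are in $Q$; $x\oplus_{|Q}y$ is defined iff $x\oplus y$ is defined and lies in $Q$. The induced order of a generalized effect algebra is $x\le y$ iff $x\oplus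 z=y$ for some $z$. It is monotone Dedekind upwards $\sigma$-complete if every increasing sequence with an upper bound has a supremum, and monotone Dedekind downwards $\sigma$-complete if every decreasing sequence has an infimum. *)

theory Defs
  imports "HOL-Analysis.Analysis"
begin

text \<open>The carrier is the whole type 'a; addition, zero, subtraction come from ab_group_add;
  complex scalar multiplication and the inner product (linear in the first argument)
  are the fields of the record.\<close>

record 'a chs =
  smult :: "complex \<Rightarrow> 'a \<Rightarrow> 'a"
  inner :: "'a \<Rightarrow> 'a \<Rightarrow> complex"

definition hnorm :: "('a::ab_group_add) chs \<Rightarrow> 'a \<Rightarrow> real" where
  "hnorm H x = sqrt (Re (inner H x x))"

definition lin_indep :: "('a::ab_group_add) chs \<Rightarrow> 'a set \<Rightarrow> bool" where
  "lin_indep H S \<longleftrightarrow> (\<forall>c. (\<Sum>x\<in>S. smult H (c x) x) = 0 \<longrightarrow> (\<forall>x\<in>S. c x = 0))"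

definition complex_hilbert_space :: "('a::ab_group_add) chs \<Rightarrow> bool" where
  "complex_hilbert_space H \<longleftrightarrow>
     (\<forall>a x y. smult H a (x + y) = smult H a x + smult H a y) \<and>
     (\<forall>a b x. smult H (a + b) x = smult H a x + smult H b x) \<and>
     (\<forall>a b x. smult H a (smult H b x) = smult H (a * b) x) \<and>
     (\<forall>x. smult H 1 x = x) \<and>
     (\<forall>x y z. inner H (x + y) z = inner H x z + inner H y z) \<and>
     (\<forall>a x y. inner H (smult H a x) y = a * inner H x y) \<and>
     (\<forall>x y. inner H y x = cnj (inner H x y)) \<and>
     (\<forall>x. 0 \<le> Re (inner H x x)) \<and>
     (\<forall>x. inner H x x = 0 \<longrightarrow> x = 0) \<and>
     (\<forall>X::nat \<Rightarrow> 'a. (\<forall>e>0. \<exists>N. \<forall>m\<ge>N. \<forall>n\<ge>N. hnorm H (X m - X n) < e) \<longrightarrow>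
        (\<exists>L. \<forall>e>0. \<exists>N. \<forall>n\<ge>N. hnorm H (X n - L) < e))"

definition infinite_dimensional :: "('a::ab_group_add) chs \<Rightarrow> bool" where
  "infinite_dimensional H \<longleftrightarrow> (\<forall>n. \<exists>S. finite S \<and> card S = n \<and> lin_indep H S)"

definition lin_subspace :: "('a::ab_group_add) chs \<Rightarrow> 'a set \<Rightarrow> bool" where
  "lin_subspace H D \<longleftrightarrow> 0 \<in> D \<and> (\<forall>x\<in>D. \<forall>y\<in>D. x + y \<in> D) \<and> (\<forall>a. \<forall>x\<in>D. smult H a x \<in> D)"

definition dense_in :: "('a::ab_group_add) chs \<Rightarrow> 'a set \<Rightarrow> bool" where
  "dense_in H D \<longleftrightarrow> (\<forall>x. \<forall>e>0. \<exists>y\<in>D. hnorm H (x - y) < e)"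

text \<open>A form is a pair (domain, values); values outside domain x domain are normalised to 0,
  so that forms are equal iff they have the same domain and agree on it.\<close>

type_synonym 'a form = "'a set \<times> ('a \<Rightarrow> 'a \<Rightarrow> complex)"

definition fdom :: "'a form \<Rightarrow> 'a set" where "fdom t = fst t"
definition fval :: "'a form \<Rightarrow> 'a \<Rightarrow> 'a \<Rightarrow> complex" where "fval t = snd t"

definition is_form :: "('a::ab_group_add) chs \<Rightarrow> 'a form \<Rightarrow> bool" where
  "is_form H t \<longleftrightarrow> lin_subspace H (fdom t) \<and> dense_in H (fdom t) \<and>
     (\<forall>x y. x \<notin> fdom t \<or> y \<notin> fdom t \<longrightarrow> fval t x y = 0) \<and>
     (\<forall>x\<in>fdom t. \<forall>y\<in>fdom t. \<forall>z\<in>fdom t. fval t (x + y) z = fval t x z + fval t y z) \<and>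
     (\<forall>x\<in>fdom t. \<forall>y\<in>fdom t. \<forall>z\<in>fdom t. fval t x (y + z) = fval t x y + fval t x z) \<and>
     (\<forall>a. \<forall>x\<in>fdom t. \<forall>y\<in>fdom t. fval t (smult H a x) y = a * fval t x y) \<and>
     (\<forall>a. \<forall>x\<in>fdom t. \<forall>y\<in>fdom t. fval t x (smult H a y) = cnj a * fval t x y)"

definition form_positive :: "'a form \<Rightarrow> bool" where
  "form_positive t \<longleftrightarrow> (\<forall>x\<in>fdom t. Im (fval t x x) = 0 \<and> 0 \<le> Re (fval t x x))"

definition form_bounded :: "('a::ab_group_add) chs \<Rightarrow> 'a form \<Rightarrow> bool" where
  "form_bounded H t \<longleftrightarrow> (\<exists>C. \<forall>x\<in>fdom t. hnorm H x = 1 \<longrightarrow> Re (fval t x x) \<le> C)"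

definition form_add :: "'a form \<Rightarrow> 'a form \<Rightarrow> 'a form" where
  "form_add t s = (fdom t \<inter> fdom s,
     (\<lambda>x y. if x \<in> fdom t \<inter> fdom s \<and> y \<in> fdom t \<inter> fdom s then fval t x y + fval s x y else 0))"

definition zero_form :: "'a form" where
  "zero_form = (UNIV, (\<lambda>x y. 0))"

definition Vf :: "('a::ab_group_add) chs \<Rightarrow> 'a form set" where
  "Vf H = {t. is_form H t \<and> form_positive t \<and> (form_bounded H t \<longrightarrow> fdom t = UNIV)}"

definition Vf_oplus :: "('a::ab_group_add) chs \<Rightarrow> 'a form \<Rightarrow> 'a form \<Rightarrow> 'a form option" where
  "Vf_oplus H t s = (if form_bounded H t \<or> form_bounded H s \<or> fdom t = fdom s
                     then Some (form_add t s) else None)"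

definition VfD :: "('a::ab_group_add) chs \<Rightarrow> 'a set \<Rightarrow> 'a form set" where
  "VfD H D = {t \<in> Vf H. form_bounded H t \<or> fdom t = D}"

definition sub_gea :: "'b set \<Rightarrow> ('b \<Rightarrow> 'b \<Rightarrow> 'b option) \<Rightarrow> 'b \<Rightarrow> 'b set \<Rightarrow> bool" where
  "sub_gea E op z Q \<longleftrightarrow> Q \<subseteq> E \<and> z \<in> Q \<and>
     (\<forall>x\<in>E. \<forall>y\<in>E. \<forall>w\<in>E. op x y = Some w \<longrightarrow>
        ((x \<in> Q \<and> y \<in> Q) \<or> (x \<in> Q \<and> w \<in> Q) \<or> (y \<in> Q \<and> w \<in> Q)) \<longrightarrow>
        x \<in> Q \<and> y \<in> Q \<and> w \<in> Q)"

definition restrict_op :: "('b \<Rightarrow> 'b \<Rightarrow> 'b option) \<Rightarrow> 'b set \<Rightarrow> 'b \<Rightarrow> 'b \<Rightarrow> 'b option" where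
  "restrict_op op Q x y = (case op x y of Some w \<Rightarrow> if w \<in> Q then Some w else None | None \<Rightarrow> None)"

definition op_total :: "'b set \<Rightarrow> ('b \<Rightarrow> 'b \<Rightarrow> 'b option) \<Rightarrow> bool" where
  "op_total Q op \<longleftrightarrow> (\<forall>x\<in>Q. \<forall>y\<in>Q. op x y \<noteq> None)"

definition gea_le :: "'b set \<Rightarrow> ('b \<Rightarrow> 'b \<Rightarrow> 'b option) \<Rightarrow> 'b \<Rightarrow> 'b \<Rightarrow> bool" where
  "gea_le Q op x y \<longleftrightarrow> (\<exists>z\<in>Q. op x z = Some y)"

definition is_sup_in :: "'b set \<Rightarrow> ('b \<Rightarrow> 'b \<Rightarrow> 'b option) \<Rightarrow> (nat \<Rightarrow> 'b) \<Rightarrow> 'b \<Rightarrow> bool" where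
  "is_sup_in Q op X s \<longleftrightarrow> s \<in> Q \<and> (\<forall>n. gea_le Q op (X n) s) \<and>
     (\<forall>u\<in>Q. (\<forall>n. gea_le Q op (X n) u) \<longrightarrow> gea_le Q op s u)"

definition is_inf_in :: "'b set \<Rightarrow> ('b \<Rightarrow> 'b \<Rightarrow> 'b option) \<Rightarrow> (nat \<Rightarrow> 'b) \<Rightarrow> 'b \<Rightarrow> bool" where
  "is_inf_in Q op X s \<longleftrightarrow> s \<in> Q \<and> (\<forall>n. gea_le Q op s (X n)) \<and>
     (\<forall>u\<in>Q. (\<forall>n. gea_le Q op u (X n)) \<longrightarrow> gea_le Q op u s)"

definition monotone_dedekind_up_sigma_complete ::
  "'b set \<Rightarrow> ('b \<Rightarrow> 'b \<Rightarrow> 'b option) \<Rightarrow> bool" where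
  "monotone_dedekind_up_sigma_complete Q op \<longleftrightarrow>
     (\<forall>X. (\<forall>n. X n \<in> Q) \<and> (\<forall>n. gea_le Q op (X n) (X (Suc n))) \<and>
          (\<exists>u\<in>Q. \<forall>n. gea_le Q op (X n) u) \<longrightarrow> (\<exists>s. is_sup_in Q op X s))"

definition monotone_dedekind_down_sigma_complete ::
  "'b set \<Rightarrow> ('b \<Rightarrow> 'b \<Rightarrow> 'b option) \<Rightarrow> bool" where
  "monotone_dedekind_down_sigma_complete Q op \<longleftrightarrow>
     (\<forall>X. (\<forall>n. X n \<in> Q) \<and> (\<forall>n. gea_le Q op (X (Suc n)) (X n)) \<longrightarrow> (\<exists>s. is_inf_in Q op X s))"

end

theory Submission
  imports Defs
begin

definition limf :: "(nat \<Rightarrow> 'a form) \<Rightarrow> 'a set \<Rightarrow> 'a form" where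
  "limf X S = (S, \<lambda>x y. if x \<in> S \<and> y \<in> S then lim (\<lambda>n. fval (X n) x y) else 0)"

definition dform :: "'a form \<Rightarrow> ('a::ab_group_add) form \<Rightarrow> 'a form" where
  "dform y x = (fdom y, \<lambda>a b. if a \<in> fdom y \<and> b \<in> fdom y then fval y a b - fval x a b else 0)"

lemma fdom_pair[simp]: "fdom (a, b) = a" by (simp add: fdom_def)
lemma fval_pair[simp]: "fval (a, b) = b" by (simp add: fval_def)
lemma form_eqI: "fdom s = fdom t \<Longrightarrow> fval s = fval t \<Longrightarrow> s = t"
  by (simp add: fdom_def fval_def prod_eq_iff)
lemma fdom_add[simp]: "fdom (form_add t s) = fdom t \<inter> fdom s" by (simp add: form_add_def)
lemma fval_add: "fval (form_add t s) x y =
   (if x \<in> fdom t \<inter> fdom s \<and> y \<in> fdom t \<inter> fdom s then fval t x y + fval s x y else 0)"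
  by (simp add: form_add_def)
lemma form_add_comm: "form_add t s = form_add s t"
  by (rule form_eqI) (auto simp: fval_add fun_eq_iff)

locale CH =
  fixes H :: "('a::ab_group_add) chs"
  assumes hs: "complex_hilbert_space H"
begin

abbreviation sm where "sm \<equiv> smult H"
abbreviation ip where "ip \<equiv> inner H"
abbreviation nrm where "nrm \<equiv> hnorm H"

lemmas hs' = hs[unfolded complex_hilbert_space_def]
lemma sm_add_r: "sm a (x + y) = sm a x + sm a y" using hs'[THEN conjunct1] by blast
lemma sm_add_l: "sm (a + b) x = sm a x + sm b x" using hs'[THEN conjunct2, THEN conjunct1] by blast
lemma sm_sm: "sm a (sm b x) = sm (a * b) x" using hs'[THEN conjunct2, THEN conjunct2, THEN conjunct1] by blast
lemma sm_one[simp]: "sm 1 x = x" using hs'[THEN conjunct2, THEN conjunct2, THEN conjunct2, THEN conjunct1] by blast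
lemma ip_add_l: "ip (x + y) z = ip x z + ip y z" using hs'[THEN conjunct2, THEN conjunct2, THEN conjunct2, THEN conjunct2, THEN conjunct1] by blast
lemma ip_sm_l: "ip (sm a x) y = a * ip x y" using hs'[THEN conjunct2, THEN conjunct2, THEN conjunct2, THEN conjunct2, THEN conjunct2, THEN conjunct1] by blast
lemma ip_cnj: "ip y x = cnj (ip x y)" using hs'[THEN conjunct2, THEN conjunct2, THEN conjunct2, THEN conjunct2, THEN conjunct2, THEN conjunct2, THEN conjunct1] by blast
lemma ip_pos: "0 \<le> Re (ip x x)" using hs'[THEN conjunct2, THEN conjunct2, THEN conjunct2, THEN conjunct2, THEN conjunct2, THEN conjunct2, THEN conjunct2, THEN conjunct1] by blast
lemma ip_def0: "ip x x = 0 \<Longrightarrow> x = 0" using hs'[THEN conjunct2, THEN conjunct2, THEN conjunct2, THEN conjunct2, THEN conjunct2, THEN conjunct2, THEN conjunct2, THEN conjunct2, THEN conjunct1] by blast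

lemma sm_zero_l[simp]: "sm 0 x = 0"
proof -
  have "sm (0+0) x = sm 0 x + sm 0 x" by (rule sm_add_l)
  then show ?thesis by simp
qed

lemma sm_zero_r[simp]: "sm a 0 = 0"
proof -
  have "sm a (0+0) = sm a 0 + sm a 0" by (rule sm_add_r)
  then show ?thesis by simp
qed

lemma sm_neg1: "sm (-1) x = - x"
proof -
  have "sm (1 + -1) x = sm 1 x + sm (-1) x" by (rule sm_add_l)
  then have "0 = x + sm (-1) x" by simp
  then show ?thesis by (simp add: eq_neg_iff_add_eq_0 add.commute)
qed

lemma sm_minus_r: "sm a (- x) = - sm a x"
proof -
  have "sm a (- x) = sm a (sm (-1) x)" by (simp add: sm_neg1)
  also have "\<dots> = sm (-1) (sm a x)" by (simp add: sm_sm)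
  finally show ?thesis by (simp add: sm_neg1)
qed

lemma sm_diff_r: "sm a (x - y) = sm a x - sm a y"
  using sm_add_r[of a x "- y"] by (simp add: sm_minus_r)

lemma cnj_ip: "cnj (ip x y) = ip y x" by (rule sym, rule ip_cnj)

lemma ip_add_r: "ip x (y + z) = ip x y + ip x z"
proof -
  have "ip x (y + z) = cnj (ip (y + z) x)" by (rule ip_cnj)
  also have "\<dots> = cnj (ip y x) + cnj (ip z x)" by (simp add: ip_add_l)
  finally show ?thesis by (simp add: cnj_ip)
qed
lemma ip_sm_r: "ip x (sm a y) = cnj a * ip x y"
proof -
  have "ip x (sm a y) = cnj (ip (sm a y) x)" by (rule ip_cnj)
  also have "\<dots> = cnj a * cnj (ip y x)" by (simp add: ip_sm_l)
  finally show ?thesis by (simp add: cnj_ip)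
qed

definition sesq :: "'a set \<Rightarrow> ('a \<Rightarrow> 'a \<Rightarrow> complex) \<Rightarrow> bool" where
  "sesq S f \<longleftrightarrow> lin_subspace H S \<and>
     (\<forall>x\<in>S. \<forall>y\<in>S. \<forall>z\<in>S. f (x + y) z = f x z + f y z) \<and>
     (\<forall>x\<in>S. \<forall>y\<in>S. \<forall>z\<in>S. f x (y + z) = f x y + f x z) \<and>
     (\<forall>a. \<forall>x\<in>S. \<forall>y\<in>S. f (sm a x) y = a * f x y) \<and>
     (\<forall>a. \<forall>x\<in>S. \<forall>y\<in>S. f x (sm a y) = cnj a * f x y)"

definition posf :: "'a set \<Rightarrow> ('a \<Rightarrow> 'a \<Rightarrow> complex) \<Rightarrow> bool" where
  "posf S f \<longleftrightarrow> (\<forall>x\<in>S. Im (f x x) = 0 \<and> 0 \<le> Re (f x x))"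

definition bnd :: "'a set \<Rightarrow> ('a \<Rightarrow> 'a \<Rightarrow> complex) \<Rightarrow> real \<Rightarrow> bool" where
  "bnd S f C \<longleftrightarrow> (\<forall>x\<in>S. Re (f x x) \<le> C * (nrm x)\<^sup>2)"

lemma subsp_add: "lin_subspace H S \<Longrightarrow> x \<in> S \<Longrightarrow> y \<in> S \<Longrightarrow> x + y \<in> S"
  by (simp add: lin_subspace_def)
lemma subsp_sm: "lin_subspace H S \<Longrightarrow> x \<in> S \<Longrightarrow> sm a x \<in> S"
  by (simp add: lin_subspace_def)
lemma subsp_0: "lin_subspace H S \<Longrightarrow> 0 \<in> S"
  by (simp add: lin_subspace_def)
lemma subsp_uminus: "lin_subspace H S \<Longrightarrow> x \<in> S \<Longrightarrow> - x \<in> S"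
  using subsp_sm[of S x "-1"] by (simp add: sm_neg1)
lemma subsp_diff: "lin_subspace H S \<Longrightarrow> x \<in> S \<Longrightarrow> y \<in> S \<Longrightarrow> x - y \<in> S"
  using subsp_add[of S x "-y"] subsp_uminus[of S y] by simp

lemma subsp_UNIV: "lin_subspace H UNIV" by (simp add: lin_subspace_def)

context
  fixes S f assumes sq: "sesq S f"
begin
lemma sq_sub: "lin_subspace H S" using sq by (simp add: sesq_def)
lemma sq_addl: "x \<in> S \<Longrightarrow> y \<in> S \<Longrightarrow> z \<in> S \<Longrightarrow> f (x + y) z = f x z + f y z"
  using sq by (simp add: sesq_def)
lemma sq_addr: "x \<in> S \<Longrightarrow> y \<in> S \<Longrightarrow> z \<in> S \<Longrightarrow> f x (y + z) = f x y + f x z"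
  using sq by (simp add: sesq_def)
lemma sq_sml: "x \<in> S \<Longrightarrow> y \<in> S \<Longrightarrow> f (sm a x) y = a * f x y"
  using sq by (simp add: sesq_def)
lemma sq_smr: "x \<in> S \<Longrightarrow> y \<in> S \<Longrightarrow> f x (sm a y) = cnj a * f x y"
  using sq by (simp add: sesq_def)
lemma sq_diffl: "x \<in> S \<Longrightarrow> y \<in> S \<Longrightarrow> z \<in> S \<Longrightarrow> f (x - y) z = f x z - f y z"
proof -
  assume a: "x \<in> S" "y \<in> S" "z \<in> S"
  have "f ((x - y) + y) z = f (x - y) z + f y z"
    using a sq_addl subsp_diff[OF sq_sub] by metis
  then show ?thesis by simp
qed
lemma sq_diffr: "x \<in> S \<Longrightarrow> y \<in> S \<Longrightarrow> z \<in> S \<Longrightarrow> f z (x - y) = f z x - f z y"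
proof -
  assume a: "x \<in> S" "y \<in> S" "z \<in> S"
  have "f z ((x - y) + y) = f z (x - y) + f z y"
    using a sq_addr subsp_diff[OF sq_sub] by metis
  then show ?thesis by simp
qed
lemma sq_expand: "x \<in> S \<Longrightarrow> y \<in> S \<Longrightarrow>
  f (x + sm c y) (x + sm c y) = f x x + cnj c * f x y + c * f y x + c * cnj c * f y y"
proof -
  assume a: "x \<in> S" "y \<in> S"
  have b: "sm c y \<in> S" using a subsp_sm[OF sq_sub] by blast
  have xy: "x + sm c y \<in> S" using a b subsp_add[OF sq_sub] by blast
  have e0: "f (x + sm c y) (x + sm c y) = f x (x + sm c y) + f (sm c y) (x + sm c y)"
    by (rule sq_addl[OF a(1) b xy])
  have e1: "f x (x + sm c y) = f x x + f x (sm c y)" by (rule sq_addr[OF a(1) a(1) b])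
  have e2: "f (sm c y) (x + sm c y) = f (sm c y) x + f (sm c y) (sm c y)" by (rule sq_addr[OF b a(1) b])
  have e3: "f x (sm c y) = cnj c * f x y" by (rule sq_smr[OF a(1) a(2)])
  have e4: "f (sm c y) x = c * f y x" by (rule sq_sml[OF a(2) a(1)])
  have e5: "f (sm c y) (sm c y) = c * f y (sm c y)" by (rule sq_sml[OF a(2) b])
  have e6: "f y (sm c y) = cnj c * f y y" by (rule sq_smr[OF a(2) a(2)])
  show ?thesis unfolding e0 e1 e2 e3 e4 e5 e6 by (simp add: algebra_simps)
qed

lemma polar: "x \<in> S \<Longrightarrow> y \<in> S \<Longrightarrow>
  f x y = (f (x + y) (x + y) - f (x + sm (-1) y) (x + sm (-1) y)
          + \<i> * f (x + sm \<i> y) (x + sm \<i> y) - \<i> * f (x + sm (-\<i>) y) (x + sm (-\<i>) y)) / 4"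
proof -
  assume a: "x \<in> S" "y \<in> S"
  have e1: "f (x+y) (x+y) = f x x + f x y + f y x + f y y" using sq_expand[OF a, of 1] by simp
  have e2: "f (x + sm (-1) y) (x + sm (-1) y) = f x x - f x y - f y x + f y y"
    using sq_expand[OF a, of "-1"] by simp
  have e3: "f (x + sm \<i> y) (x + sm \<i> y) = f x x - \<i> * f x y + \<i> * f y x + f y y"
    using sq_expand[OF a, of "\<i>"] by simp
  have e4: "f (x + sm (-\<i>) y) (x + sm (-\<i>) y) = f x x + \<i> * f x y - \<i> * f y x + f y y"
    using sq_expand[OF a, of "-\<i>"] by simp
  show ?thesis unfolding e1 e2 e3 e4 by (simp add: field_simps)
qed

lemma sq_herm: "posf S f \<Longrightarrow> x \<in> S \<Longrightarrow> y \<in> S \<Longrightarrow> f y x = cnj (f x y)"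
proof -
  assume p: "posf S f" and a: "x \<in> S" "y \<in> S"
  have s1: "x + y \<in> S" "x + sm \<i> y \<in> S" using a subsp_add[OF sq_sub] subsp_sm[OF sq_sub] by auto
  have i1: "Im (f (x + y) (x + y)) = 0" "Im (f (x + sm \<i> y) (x + sm \<i> y)) = 0"
    "Im (f x x) = 0" "Im (f y y) = 0"
    using p s1 a by (auto simp: posf_def)
  have e1: "f (x + y) (x + y) = f x x + f x y + f y x + f y y"
    using sq_expand[OF a, of 1] by simp
  have e2: "f (x + sm \<i> y) (x + sm \<i> y) = f x x - \<i> * f x y + \<i> * f y x + f y y"
    using sq_expand[OF a, of \<i>] by simp
  have "Im (f x y + f y x) = 0" "Re (f y x - f x y) = 0"
    using i1 unfolding e1 e2 by simp_all
  then show ?thesis by (simp add: complex_eq_iff)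
qed

lemma sq_CS: "posf S f \<Longrightarrow> x \<in> S \<Longrightarrow> y \<in> S \<Longrightarrow> (cmod (f x y))\<^sup>2 \<le> Re (f x x) * Re (f y y)"
proof -
  assume p: "posf S f" and a: "x \<in> S" "y \<in> S"
  define A where "A = Re (f x x)"
  define B where "B = Re (f y y)"
  define P where "P = (cmod (f x y))\<^sup>2"
  have fxx: "f x x = of_real A" using p a by (simp add: posf_def A_def complex_eq_iff)
  have fyy: "f y y = of_real B" using p a by (simp add: posf_def B_def complex_eq_iff)
  have A0: "0 \<le> A" "0 \<le> B" using p a by (auto simp: posf_def A_def B_def)
  have herm: "f y x = cnj (f x y)" using sq_herm p a by blast
  have pp: "f x y * cnj (f x y) = of_real P" unfolding P_def by (rule complex_norm_square[symmetric])
  have key: "0 \<le> A - 2 * t * P + t\<^sup>2 * P * B" for t :: real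
  proof -
    define c where "c = - (of_real t * f x y)"
    have "x + sm c y \<in> S" using a subsp_add[OF sq_sub] subsp_sm[OF sq_sub] by auto
    then have "0 \<le> Re (f (x + sm c y) (x + sm c y))" using p by (simp add: posf_def)
    also have "f (x + sm c y) (x + sm c y) = of_real (A - 2 * t * P + t\<^sup>2 * P * B)"
    proof -
      have c1: "cnj c * f x y = - of_real (t * P)"
        using pp by (simp add: c_def algebra_simps)
      have c2: "c * f y x = - of_real (t * P)"
        using pp by (simp add: c_def herm algebra_simps)
      have c3: "c * cnj c * f y y = of_real (t\<^sup>2 * P * B)"
        using pp by (simp add: c_def fyy algebra_simps power2_eq_square)
      show ?thesis unfolding sq_expand[OF a] c1 c2 c3 fxx by simp
    qed
    finally show ?thesis by simp
  qed
  show ?thesis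
  proof (cases "P = 0")
    case True then show ?thesis using A0 by (simp add: P_def A_def B_def)
  next
    case False
    then have P0: "P > 0" by (simp add: P_def)
    show ?thesis
    proof (cases "B = 0")
      case True
      have "0 \<le> A - 2 * ((A + 1) / (2 * P)) * P" using key[of "(A+1)/(2*P)"] True by simp
      also have "\<dots> = -1" using P0 by (simp add: field_simps)
      finally show ?thesis by simp
    next
      case False
      then have B0: "B > 0" using A0 by simp
      have "0 \<le> A - 2 * (1/B) * P + (1/B)\<^sup>2 * P * B" by (rule key)
      also have "\<dots> = (A * B - P) / B" using B0 by (simp add: field_simps power2_eq_square)
      finally have "0 \<le> A * B - P" using B0 by (simp add: divide_nonneg_pos zero_le_divide_iff)
      then show ?thesis by (simp add: P_def A_def B_def)
    qed
  qed
qed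
end

lemma isf_sesq: "is_form H t \<Longrightarrow> sesq (fdom t) (fval t)"
  unfolding is_form_def sesq_def by blast
lemma isf_dense: "is_form H t \<Longrightarrow> dense_in H (fdom t)"
  unfolding is_form_def by blast
lemma isf_norm: "is_form H t \<Longrightarrow> x \<notin> fdom t \<or> y \<notin> fdom t \<Longrightarrow> fval t x y = 0"
  unfolding is_form_def by blast
lemma pos_posf: "form_positive t \<Longrightarrow> posf (fdom t) (fval t)"
  unfolding form_positive_def posf_def by blast

lemma sq_zero_l: "sesq S f \<Longrightarrow> y \<in> S \<Longrightarrow> f 0 y = 0"
  using sq_sml[of S f 0 y 0] subsp_0[OF sq_sub] by simp

lemma ip_zero_l[simp]: "ip 0 y = 0"
  using ip_sm_l[of 0 0 y] by simp

lemma ip_sesq: "sesq UNIV ip"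
  unfolding sesq_def using subsp_UNIV ip_add_l ip_add_r ip_sm_l ip_sm_r by auto

lemma ip_Im: "Im (ip x x) = 0"
proof -
  have "ip x x = cnj (ip x x)" by (rule ip_cnj)
  then have "Im (ip x x) = Im (cnj (ip x x))" by simp
  then show ?thesis by simp
qed

lemma ip_posf: "posf UNIV ip"
  unfolding posf_def using ip_Im ip_pos by auto

lemma nrm_nonneg: "0 \<le> nrm x" using ip_pos[of x] by (simp add: hnorm_def)
lemma nrm_sq: "(nrm x)\<^sup>2 = Re (ip x x)" using ip_pos[of x] by (simp add: hnorm_def)
lemma nrm_zero[simp]: "nrm 0 = 0" by (simp add: hnorm_def)

lemma nrm_eq0: "nrm x = 0 \<Longrightarrow> x = 0"
proof -
  assume "nrm x = 0"
  then have "Re (ip x x) = 0" using nrm_sq[of x] by simp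
  then have "ip x x = 0" using ip_Im[of x] by (simp add: complex_eq_iff)
  then show ?thesis by (rule ip_def0)
qed

lemma nrm_sm: "nrm (sm c x) = cmod c * nrm x"
proof -
  have "ip (sm c x) (sm c x) = (c * cnj c) * ip x x" by (simp add: ip_sm_l ip_sm_r)
  also have "c * cnj c = of_real ((cmod c)\<^sup>2)" by (rule complex_norm_square[symmetric])
  finally have "Re (ip (sm c x) (sm c x)) = (cmod c)\<^sup>2 * Re (ip x x)" by simp
  then show ?thesis by (simp add: hnorm_def real_sqrt_mult)
qed

lemma nrm_uminus[simp]: "nrm (- x) = nrm x"
  using nrm_sm[of "-1" x] by (simp add: sm_neg1)

lemma nrm_commute: "nrm (x - y) = nrm (y - x)"
  using nrm_uminus[of "y - x"] by simp

lemma ip_CS: "cmod (ip x y) \<le> nrm x * nrm y"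
proof -
  have "(cmod (ip x y))\<^sup>2 \<le> Re (ip x x) * Re (ip y y)"
    using sq_CS[OF ip_sesq ip_posf] by simp
  also have "\<dots> = (nrm x * nrm y)\<^sup>2" by (simp add: nrm_sq power_mult_distrib)
  finally show ?thesis
    by (rule power2_le_imp_le) (simp add: nrm_nonneg)
qed

lemma nrm_tri: "nrm (x + y) \<le> nrm x + nrm y"
proof -
  have "(nrm (x + y))\<^sup>2 = Re (ip x x + ip x y + ip y x + ip y y)"
    by (simp add: nrm_sq ip_add_l ip_add_r)
  also have "\<dots> = Re (ip x x) + Re (ip x y) + Re (ip y x) + Re (ip y y)" by simp
  also have "\<dots> \<le> (nrm x)\<^sup>2 + nrm x * nrm y + nrm x * nrm y + (nrm y)\<^sup>2"
  proof -
    have h1: "Re (ip x y) \<le> nrm x * nrm y"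
      using complex_Re_le_cmod[of "ip x y"] ip_CS[of x y] by linarith
    have h2: "Re (ip y x) \<le> nrm x * nrm y"
      using complex_Re_le_cmod[of "ip y x"] ip_CS[of y x] by (simp add: mult.commute)
    show ?thesis using h1 h2 nrm_sq[of x] nrm_sq[of y] by linarith
  qed
  also have "\<dots> = (nrm x + nrm y)\<^sup>2" by (simp add: power2_eq_square algebra_simps)
  finally show ?thesis
    by (rule power2_le_imp_le) (simp add: nrm_nonneg add_nonneg_nonneg)
qed

lemma nrm_tri_diff: "nrm (a - c) \<le> nrm (a - b) + nrm (b - c)"
  using nrm_tri[of "a - b" "b - c"] by simp

lemma nrm_rev: "\<bar>nrm a - nrm b\<bar> \<le> nrm (a - b)"
proof -
  have "nrm a \<le> nrm (a - b) + nrm b" using nrm_tri[of "a - b" b] by simp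
  moreover have "nrm b \<le> nrm (b - a) + nrm a" using nrm_tri[of "b - a" a] by simp
  ultimately show ?thesis using nrm_commute[of a b] by linarith
qed

lemma nrm_le_add: "nrm a \<le> nrm b + nrm (a - b)"
  using nrm_tri[of b "a - b"] by simp

lemma fb_bnd:
  assumes isf: "is_form H t" and pos: "form_positive t" and fb: "form_bounded H t"
  shows "\<exists>C\<ge>0. bnd (fdom t) (fval t) C"
proof -
  have sq: "sesq (fdom t) (fval t)" by (rule isf_sesq[OF isf])
  obtain C0 where C0: "\<forall>x\<in>fdom t. nrm x = 1 \<longrightarrow> Re (fval t x x) \<le> C0"
    using fb by (auto simp: form_bounded_def)
  define C where "C = max C0 0"
  have "bnd (fdom t) (fval t) C"
    unfolding bnd_def
  proof
    fix v assume v: "v \<in> fdom t"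
    show "Re (fval t v v) \<le> C * (nrm v)\<^sup>2"
    proof (cases "v = 0")
      case True
      then show ?thesis using sq_zero_l[OF sq] v by (simp add: C_def)
    next
      case False
      define r where "r = nrm v"
      have r0: "r > 0" using False nrm_eq0 nrm_nonneg r_def by (metis less_eq_real_def)
      define u where "u = sm (of_real (1/r)) v"
      have u: "u \<in> fdom t" using v subsp_sm[OF sq_sub[OF sq]] u_def by blast
      have nu: "nrm u = 1" unfolding u_def nrm_sm norm_of_real using r0 r_def by simp
      have vu: "v = sm (of_real r) u" using r0 by (simp add: u_def sm_sm flip: of_real_mult)
      have "fval t v v = of_real r * (cnj (of_real r) * fval t u u)"
        using vu u sq_sml[OF sq] sq_smr[OF sq] subsp_sm[OF sq_sub[OF sq]] by metis
      then have "Re (fval t v v) = r\<^sup>2 * Re (fval t u u)" by (simp add: power2_eq_square)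
      also have "\<dots> \<le> r\<^sup>2 * C"
      proof -
        have "Re (fval t u u) \<le> C" using C0 u nu unfolding C_def by fastforce
        then show ?thesis by (simp add: mult_left_mono)
      qed
      finally show ?thesis by (simp add: r_def mult.commute)
    qed
  qed
  moreover have "0 \<le> C" by (simp add: C_def)
  ultimately show ?thesis by blast
qed

context
  fixes S f C assumes sq: "sesq S f" and ps: "posf S f" and bd: "bnd S f C" and C0: "0 \<le> C"
begin

lemma sq_bound: "x \<in> S \<Longrightarrow> y \<in> S \<Longrightarrow> cmod (f x y) \<le> C * nrm x * nrm y"
proof -
  assume a: "x \<in> S" "y \<in> S"
  have "(cmod (f x y))\<^sup>2 \<le> Re (f x x) * Re (f y y)" by (rule sq_CS[OF sq ps a])
  also have "\<dots> \<le> (C * (nrm x)\<^sup>2) * (C * (nrm y)\<^sup>2)"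
    using bd ps a C0 by (intro mult_mono) (auto simp: bnd_def posf_def)
  also have "\<dots> = (C * nrm x * nrm y)\<^sup>2" by (simp add: power2_eq_square)
  finally show ?thesis
    by (rule power2_le_imp_le) (simp add: C0 nrm_nonneg)
qed

lemma LB: "a \<in> S \<Longrightarrow> b \<in> S \<Longrightarrow> a' \<in> S \<Longrightarrow> b' \<in> S \<Longrightarrow>
  cmod (f a b - f a' b') \<le> C * nrm (a - a') * nrm b + C * nrm a' * nrm (b - b')"
proof -
  assume a: "a \<in> S" "b \<in> S" "a' \<in> S" "b' \<in> S"
  have "f a b - f a' b' = f (a - a') b + f a' (b - b')"
    using sq_diffl[OF sq a(1) a(3) a(2)] sq_diffr[OF sq a(2) a(4) a(3)] by simp
  moreover have "cmod (f (a - a') b) \<le> C * nrm (a - a') * nrm b"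
    using sq_bound a subsp_diff[OF sq_sub[OF sq]] by blast
  moreover have "cmod (f a' (b - b')) \<le> C * nrm a' * nrm (b - b')"
    using sq_bound a subsp_diff[OF sq_sub[OF sq]] by blast
  ultimately show ?thesis using norm_triangle_ineq[of "f (a - a') b" "f a' (b - b')"] by simp
qed

end

lemma CauchyB:
  fixes X :: "nat \<Rightarrow> 'b::metric_space" and \<beta> :: "nat \<Rightarrow> real"
  assumes b: "\<beta> \<longlonglongrightarrow> 0" and d: "\<And>m n. dist (X m) (X n) \<le> \<beta> m + \<beta> n"
  shows "Cauchy X"
proof (rule metric_CauchyI)
  fix e :: real assume e: "0 < e"
  have "\<forall>\<^sub>F n in sequentially. dist (\<beta> n) 0 < e / 2" using tendstoD[OF b, of "e/2"] e by simp
  then obtain M where M: "\<And>n. n \<ge> M \<Longrightarrow> dist (\<beta> n) 0 < e / 2" by (auto simp: eventually_sequentially)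
  have "\<forall>m\<ge>M. \<forall>n\<ge>M. dist (X m) (X n) < e"
  proof (intro allI impI)
    fix m n assume "m \<ge> M" "n \<ge> M"
    then have "\<bar>\<beta> m\<bar> < e/2" "\<bar>\<beta> n\<bar> < e/2" using M by (auto simp: dist_real_def)
    then show "dist (X m) (X n) < e" using d[of m n] by linarith
  qed
  then show "\<exists>M. \<forall>m\<ge>M. \<forall>n\<ge>M. dist (X m) (X n) < e" by blast
qed

lemma dense_seq:
  assumes "dense_in H S"
  shows "\<exists>a. \<forall>x n. a x n \<in> S \<and> nrm (x - a x n) < inverse (real (Suc n))"
proof -
  have "\<forall>x n. \<exists>y. y \<in> S \<and> nrm (x - y) < inverse (real (Suc n))"
  proof (intro allI)
    fix x n
    have "inverse (real (Suc n)) > 0" by simp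
    then show "\<exists>y. y \<in> S \<and> nrm (x - y) < inverse (real (Suc n))"
      using assms unfolding dense_in_def by blast
  qed
  then show ?thesis by metis
qed

lemma seq_to0:
  assumes "\<forall>n. nrm (x - a n) < inverse (real (Suc n))"
  shows "(\<lambda>n. nrm (a n - x)) \<longlonglongrightarrow> 0"
proof (rule Lim_null_comparison[OF _ LIMSEQ_inverse_real_of_nat])
  show "\<forall>\<^sub>F n in sequentially. norm (nrm (a n - x)) \<le> inverse (real (Suc n))"
    using assms nrm_commute nrm_nonneg by (auto intro!: always_eventually less_imp_le)
qed

lemma nrm_conv:
  assumes "(\<lambda>n. nrm (c n - x)) \<longlonglongrightarrow> 0"
  shows "(\<lambda>n. nrm (c n)) \<longlonglongrightarrow> nrm x"
proof -
  have "(\<lambda>n. nrm (c n) - nrm x) \<longlonglongrightarrow> 0"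
    by (rule Lim_null_comparison[OF _ assms]) (auto intro!: always_eventually simp: nrm_rev)
  then show ?thesis by (rule LIM_zero_cancel)
qed

context
  fixes S f C assumes sq: "sesq S f" and ps: "posf S f" and bd: "bnd S f C" and C0: "0 \<le> C"
begin

lemma DIFF:
  assumes S: "\<And>n. c n \<in> S" "\<And>n. d n \<in> S" "\<And>n. c' n \<in> S" "\<And>n. d' n \<in> S"
    and t: "(\<lambda>n. nrm (c n - x)) \<longlonglongrightarrow> 0" "(\<lambda>n. nrm (c' n - x)) \<longlonglongrightarrow> 0"
      "(\<lambda>n. nrm (d n - y)) \<longlonglongrightarrow> 0" "(\<lambda>n. nrm (d' n - y)) \<longlonglongrightarrow> 0"
  shows "(\<lambda>n. f (c n) (d n) - f (c' n) (d' n)) \<longlonglongrightarrow> 0"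
proof (rule Lim_null_comparison)
  let ?g = "\<lambda>n. C * (nrm (c n - x) + nrm (c' n - x)) * (nrm y + nrm (d n - y))
             + C * (nrm x + nrm (c' n - x)) * (nrm (d n - y) + nrm (d' n - y))"
  show "?g \<longlonglongrightarrow> 0"
  proof -
    have "?g \<longlonglongrightarrow> C * (0 + 0) * (nrm y + 0) + C * (nrm x + 0) * (0 + 0)"
      by (intro tendsto_intros t)
    then show ?thesis by simp
  qed
  show "\<forall>\<^sub>F n in sequentially. norm (f (c n) (d n) - f (c' n) (d' n)) \<le> ?g n"
  proof (rule always_eventually, rule allI)
    fix n
    have l: "cmod (f (c n) (d n) - f (c' n) (d' n))
       \<le> C * nrm (c n - c' n) * nrm (d n) + C * nrm (c' n) * nrm (d n - d' n)"
      by (rule LB[OF sq ps bd C0 S(1) S(2) S(3) S(4)])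
    have a1: "nrm (c n - c' n) \<le> nrm (c n - x) + nrm (c' n - x)"
      using nrm_tri_diff[of "c n" "c' n" x] nrm_commute[of x "c' n"] by simp
    have a2: "nrm (d n) \<le> nrm y + nrm (d n - y)" by (rule nrm_le_add)
    have a3: "nrm (c' n) \<le> nrm x + nrm (c' n - x)" by (rule nrm_le_add)
    have a4: "nrm (d n - d' n) \<le> nrm (d n - y) + nrm (d' n - y)"
      using nrm_tri_diff[of "d n" "d' n" y] nrm_commute[of y "d' n"] by simp
    have m1: "C * nrm (c n - c' n) * nrm (d n) \<le> C * (nrm (c n - x) + nrm (c' n - x)) * (nrm y + nrm (d n - y))"
      using a1 a2 C0 nrm_nonneg by (intro mult_mono mult_left_mono) (auto intro: add_nonneg_nonneg)
    have m2: "C * nrm (c' n) * nrm (d n - d' n) \<le> C * (nrm x + nrm (c' n - x)) * (nrm (d n - y) + nrm (d' n - y))"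
      using a3 a4 C0 nrm_nonneg by (intro mult_mono mult_left_mono) (auto intro: add_nonneg_nonneg)
    show "norm (f (c n) (d n) - f (c' n) (d' n)) \<le> ?g n" using l m1 m2 by simp
  qed
qed

lemma CONV:
  assumes "x \<in> S" "y \<in> S" "\<And>n. c n \<in> S" "\<And>n. d n \<in> S"
    "(\<lambda>n. nrm (c n - x)) \<longlonglongrightarrow> 0" "(\<lambda>n. nrm (d n - y)) \<longlonglongrightarrow> 0"
  shows "(\<lambda>n. f (c n) (d n)) \<longlonglongrightarrow> f x y"
proof -
  have "(\<lambda>n. f (c n) (d n) - f ((\<lambda>_. x) n) ((\<lambda>_. y) n)) \<longlonglongrightarrow> 0"
    by (rule DIFF) (use assms in auto)
  then show ?thesis by (simp add: LIM_zero_iff)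
qed

lemma EXT:
  assumes dn: "dense_in H S"
  shows "\<exists>g. sesq UNIV g \<and> posf UNIV g \<and> bnd UNIV g C \<and> (\<forall>x\<in>S. \<forall>y\<in>S. g x y = f x y)"
proof -
  obtain a where a: "\<And>x n. a x n \<in> S" "\<And>x n. nrm (x - a x n) < inverse (real (Suc n))"
    using dense_seq[OF dn] by blast
  have at: "(\<lambda>n. nrm (a x n - x)) \<longlonglongrightarrow> 0" for x using seq_to0 a(2) by blast
  have ga1: "nrm (a x n - x) \<le> 1" for x n
  proof -
    have "nrm (a x n - x) < inverse (real (Suc n))" using a(2) nrm_commute by metis
    also have "\<dots> \<le> 1" by (simp add: inverse_le_1_iff)
    finally show ?thesis by simp
  qed
  have conv: "convergent (\<lambda>n. f (a x n) (a y n))" for x y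
  proof -
    let ?\<beta> = "\<lambda>n. C * (nrm y + 1) * nrm (a x n - x) + C * (nrm x + 1) * nrm (a y n - y)"
    have "Cauchy (\<lambda>n. f (a x n) (a y n))"
    proof (rule CauchyB)
      show "?\<beta> \<longlonglongrightarrow> 0"
      proof -
        have "?\<beta> \<longlonglongrightarrow> C * (nrm y + 1) * 0 + C * (nrm x + 1) * 0" by (intro tendsto_intros at)
        then show ?thesis by simp
      qed
      fix m n
      have l: "cmod (f (a x m) (a y m) - f (a x n) (a y n))
         \<le> C * nrm (a x m - a x n) * nrm (a y m) + C * nrm (a x n) * nrm (a y m - a y n)"
        by (rule LB[OF sq ps bd C0 a(1) a(1) a(1) a(1)])
      have a1: "nrm (a x m - a x n) \<le> nrm (a x m - x) + nrm (a x n - x)"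
        using nrm_tri_diff[of "a x m" "a x n" x] nrm_commute[of x "a x n"] by simp
      have a2: "nrm (a y m) \<le> nrm y + 1" using nrm_le_add[of "a y m" y] ga1[of y m] by simp
      have a3: "nrm (a x n) \<le> nrm x + 1" using nrm_le_add[of "a x n" x] ga1[of x n] by simp
      have a4: "nrm (a y m - a y n) \<le> nrm (a y m - y) + nrm (a y n - y)"
        using nrm_tri_diff[of "a y m" "a y n" y] nrm_commute[of y "a y n"] by simp
      have m1: "C * nrm (a x m - a x n) * nrm (a y m) \<le> C * (nrm (a x m - x) + nrm (a x n - x)) * (nrm y + 1)"
        using a1 a2 C0 nrm_nonneg by (intro mult_mono mult_left_mono) (auto intro: add_nonneg_nonneg)
      have m2: "C * nrm (a x n) * nrm (a y m - a y n) \<le> C * (nrm x + 1) * (nrm (a y m - y) + nrm (a y n - y))"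
        using a3 a4 C0 nrm_nonneg by (intro mult_mono mult_left_mono) (auto intro: add_nonneg_nonneg)
      show "dist (f (a x m) (a y m)) (f (a x n) (a y n)) \<le> ?\<beta> m + ?\<beta> n"
        using l m1 m2 by (simp add: dist_norm algebra_simps)
    qed
    then show ?thesis by (simp add: Cauchy_convergent_iff)
  qed
  define g where "g x y = lim (\<lambda>n. f (a x n) (a y n))" for x y
  have gl: "(\<lambda>n. f (a x n) (a y n)) \<longlonglongrightarrow> g x y" for x y
    using conv[of x y] by (simp add: g_def convergent_LIMSEQ_iff)
  have G0: "(\<lambda>n. f (c n) (d n)) \<longlonglongrightarrow> g x y"
    if c: "\<And>n. c n \<in> S" "(\<lambda>n. nrm (c n - x)) \<longlonglongrightarrow> 0"
      and d: "\<And>n. d n \<in> S" "(\<lambda>n. nrm (d n - y)) \<longlonglongrightarrow> 0" for c d x y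
  proof -
    have "(\<lambda>n. f (c n) (d n) - f (a x n) (a y n)) \<longlonglongrightarrow> 0"
      by (rule DIFF[OF c(1) d(1) a(1)[of x] a(1)[of y] c(2) at[of x] d(2) at[of y]])
    then have "(\<lambda>n. (f (c n) (d n) - f (a x n) (a y n)) + f (a x n) (a y n)) \<longlonglongrightarrow> 0 + g x y"
      by (intro tendsto_add gl)
    then show ?thesis by simp
  qed
  have add_to: "(\<lambda>n. nrm ((a x n + a x' n) - (x + x'))) \<longlonglongrightarrow> 0" for x x'
  proof (rule Lim_null_comparison)
    show "(\<lambda>n. nrm (a x n - x) + nrm (a x' n - x')) \<longlonglongrightarrow> 0"
      using tendsto_add[OF at[of x] at[of x']] by simp
    show "\<forall>\<^sub>F n in sequentially. norm (nrm ((a x n + a x' n) - (x + x'))) \<le> nrm (a x n - x) + nrm (a x' n - x')"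
    proof (rule always_eventually, rule allI)
      fix n
      have eq: "(a x n + a x' n) - (x + x') = (a x n - x) + (a x' n - x')" by (simp add: algebra_simps)
      have "nrm ((a x n + a x' n) - (x + x')) \<le> nrm (a x n - x) + nrm (a x' n - x')"
        unfolding eq by (rule nrm_tri)
      then show "norm (nrm ((a x n + a x' n) - (x + x'))) \<le> nrm (a x n - x) + nrm (a x' n - x')"
        using nrm_nonneg by simp
    qed
  qed
  have sm_to: "(\<lambda>n. nrm (sm \<alpha> (a x n) - sm \<alpha> x)) \<longlonglongrightarrow> 0" for \<alpha> x
  proof -
    have "(\<lambda>n. cmod \<alpha> * nrm (a x n - x)) \<longlonglongrightarrow> cmod \<alpha> * 0" by (intro tendsto_intros at)
    then show ?thesis by (simp add: nrm_sm flip: sm_diff_r)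
  qed
  have sub: "lin_subspace H S" by (rule sq_sub[OF sq])
  have aS2: "a x n + a x' n \<in> S" for x x' n using subsp_add[OF sub a(1) a(1)] .
  have aS3: "sm \<alpha> (a x n) \<in> S" for \<alpha> x n using subsp_sm[OF sub a(1)] .
  have gsq: "sesq UNIV g"
    unfolding sesq_def
  proof (intro conjI ballI allI)
    show "lin_subspace H UNIV" by (rule subsp_UNIV)
    fix x y z
    have "(\<lambda>n. f (a x n + a y n) (a z n)) \<longlonglongrightarrow> g (x + y) z" by (rule G0[OF aS2 add_to a(1) at])
    moreover have "(\<lambda>n. f (a x n + a y n) (a z n)) = (\<lambda>n. f (a x n) (a z n) + f (a y n) (a z n))"
      using sq_addl[OF sq a(1) a(1) a(1)] by simp
    ultimately have "(\<lambda>n. f (a x n) (a z n) + f (a y n) (a z n)) \<longlonglongrightarrow> g (x + y) z" by simp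
    moreover have "(\<lambda>n. f (a x n) (a z n) + f (a y n) (a z n)) \<longlonglongrightarrow> g x z + g y z" by (intro tendsto_add gl)
    ultimately show "g (x + y) z = g x z + g y z" by (rule LIMSEQ_unique)
  next
    fix x y z
    have "(\<lambda>n. f (a x n) (a y n + a z n)) \<longlonglongrightarrow> g x (y + z)" by (rule G0[OF a(1) at aS2 add_to])
    moreover have "(\<lambda>n. f (a x n) (a y n + a z n)) = (\<lambda>n. f (a x n) (a y n) + f (a x n) (a z n))"
      using sq_addr[OF sq a(1) a(1) a(1)] by simp
    ultimately have "(\<lambda>n. f (a x n) (a y n) + f (a x n) (a z n)) \<longlonglongrightarrow> g x (y + z)" by simp
    moreover have "(\<lambda>n. f (a x n) (a y n) + f (a x n) (a z n)) \<longlonglongrightarrow> g x y + g x z" by (intro tendsto_add gl)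
    ultimately show "g x (y + z) = g x y + g x z" by (rule LIMSEQ_unique)
  next
    fix \<alpha> x y
    have "(\<lambda>n. f (sm \<alpha> (a x n)) (a y n)) \<longlonglongrightarrow> g (sm \<alpha> x) y" by (rule G0[OF aS3 sm_to a(1) at])
    moreover have "(\<lambda>n. f (sm \<alpha> (a x n)) (a y n)) = (\<lambda>n. \<alpha> * f (a x n) (a y n))"
      using sq_sml[OF sq a(1) a(1)] by simp
    ultimately have "(\<lambda>n. \<alpha> * f (a x n) (a y n)) \<longlonglongrightarrow> g (sm \<alpha> x) y" by simp
    moreover have "(\<lambda>n. \<alpha> * f (a x n) (a y n)) \<longlonglongrightarrow> \<alpha> * g x y" by (intro tendsto_mult tendsto_const gl)
    ultimately show "g (sm \<alpha> x) y = \<alpha> * g x y" by (rule LIMSEQ_unique)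
  next
    fix \<alpha> x y
    have "(\<lambda>n. f (a x n) (sm \<alpha> (a y n))) \<longlonglongrightarrow> g x (sm \<alpha> y)" by (rule G0[OF a(1) at aS3 sm_to])
    moreover have "(\<lambda>n. f (a x n) (sm \<alpha> (a y n))) = (\<lambda>n. cnj \<alpha> * f (a x n) (a y n))"
      using sq_smr[OF sq a(1) a(1)] by simp
    ultimately have "(\<lambda>n. cnj \<alpha> * f (a x n) (a y n)) \<longlonglongrightarrow> g x (sm \<alpha> y)" by simp
    moreover have "(\<lambda>n. cnj \<alpha> * f (a x n) (a y n)) \<longlonglongrightarrow> cnj \<alpha> * g x y" by (intro tendsto_mult tendsto_const gl)
    ultimately show "g x (sm \<alpha> y) = cnj \<alpha> * g x y" by (rule LIMSEQ_unique)
  qed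
  have gpos: "posf UNIV g"
    unfolding posf_def
  proof (intro ballI conjI)
    fix x
    have Im0: "Im (f (a x n) (a x n)) = 0" and Re0: "0 \<le> Re (f (a x n) (a x n))" for n
      using ps a(1) by (auto simp: posf_def)
    have "(\<lambda>n. Im (f (a x n) (a x n))) \<longlonglongrightarrow> Im (g x x)" by (intro tendsto_Im gl)
    then show "Im (g x x) = 0" using Im0 by (simp add: LIMSEQ_const_iff)
    have "(\<lambda>n. Re (f (a x n) (a x n))) \<longlonglongrightarrow> Re (g x x)" by (intro tendsto_Re gl)
    then show "0 \<le> Re (g x x)" by (rule LIMSEQ_le_const) (use Re0 in auto)
  qed
  have gbnd: "bnd UNIV g C"
    unfolding bnd_def
  proof
    fix x
    have "(\<lambda>n. Re (f (a x n) (a x n))) \<longlonglongrightarrow> Re (g x x)" by (intro tendsto_Re gl)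
    moreover have "(\<lambda>n. C * (nrm (a x n))\<^sup>2) \<longlonglongrightarrow> C * (nrm x)\<^sup>2"
      by (intro tendsto_intros nrm_conv at)
    moreover have "\<forall>n. Re (f (a x n) (a x n)) \<le> C * (nrm (a x n))\<^sup>2"
      using bd a(1) by (auto simp: bnd_def)
    ultimately show "Re (g x x) \<le> C * (nrm x)\<^sup>2" by (intro LIMSEQ_le) auto
  qed
  have gS: "\<forall>x\<in>S. \<forall>y\<in>S. g x y = f x y"
  proof (intro ballI)
    fix x y assume xy: "x \<in> S" "y \<in> S"
    have "(\<lambda>n. f ((\<lambda>_. x) n) ((\<lambda>_. y) n)) \<longlonglongrightarrow> g x y"
      by (rule G0) (use xy in auto)
    then show "g x y = f x y" by (simp add: LIMSEQ_const_iff)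
  qed
  show ?thesis using gsq gpos gbnd gS by blast
qed

end

lemma sesq_mono: "sesq T f \<Longrightarrow> lin_subspace H S \<Longrightarrow> S \<subseteq> T \<Longrightarrow> sesq S f"
  unfolding sesq_def by blast

lemma UNIV_isf: "sesq UNIV g \<Longrightarrow> is_form H (UNIV, g)"
proof -
  assume sq: "sesq UNIV g"
  have "dense_in H UNIV" unfolding dense_in_def
  proof (intro allI impI)
    fix x :: 'a and e :: real assume "0 < e"
    then have "nrm (x - x) < e" by simp
    then show "\<exists>y\<in>UNIV. nrm (x - y) < e" by blast
  qed
  then show ?thesis using sq unfolding is_form_def sesq_def by simp
qed

lemma UNIV_pos: "posf UNIV g \<Longrightarrow> form_positive (UNIV, g)"
  unfolding posf_def form_positive_def by simp

lemma UNIV_fb: "bnd UNIV g C \<Longrightarrow> form_bounded H (UNIV, g)"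
  unfolding bnd_def form_bounded_def
proof -
  assume b: "\<forall>x\<in>UNIV. Re (g x x) \<le> C * (nrm x)\<^sup>2"
  have "\<forall>x\<in>fdom (UNIV, g). nrm x = 1 \<longrightarrow> Re (fval (UNIV, g) x x) \<le> C"
  proof (intro ballI impI)
    fix x assume "nrm x = 1"
    then show "Re (fval (UNIV, g) x x) \<le> C" using b by (metis UNIV_I fval_pair mult.right_neutral power_one)
  qed
  then show "\<exists>C. \<forall>x\<in>fdom (UNIV, g). nrm x = 1 \<longrightarrow> Re (fval (UNIV, g) x x) \<le> C" by blast
qed

lemma Vf_isf: "t \<in> Vf H \<Longrightarrow> is_form H t" by (simp add: Vf_def)
lemma Vf_pos: "t \<in> Vf H \<Longrightarrow> form_positive t" by (simp add: Vf_def)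
lemma Vf_bdom: "t \<in> Vf H \<Longrightarrow> form_bounded H t \<Longrightarrow> fdom t = UNIV" by (simp add: Vf_def)


lemma pos_Re': "is_form H t \<Longrightarrow> form_positive t \<Longrightarrow> 0 \<le> Re (fval t v v)"
  using isf_norm[of t v v] unfolding form_positive_def by (cases "v \<in> fdom t") auto

lemma EXT_form:
  assumes isf: "is_form H t" and pos: "form_positive t" and fb: "form_bounded H t"
  shows "\<exists>t'. t' \<in> Vf H \<and> fdom t' = UNIV \<and> form_bounded H t' \<and>
            (\<forall>x\<in>fdom t. \<forall>y\<in>fdom t. fval t' x y = fval t x y)"
proof -
  obtain C where C: "0 \<le> C" "bnd (fdom t) (fval t) C" using fb_bnd[OF isf pos fb] by blast
  obtain g where g: "sesq UNIV g" "posf UNIV g" "bnd UNIV g C" "\<forall>x\<in>fdom t. \<forall>y\<in>fdom t. g x y = fval t x y"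
    using EXT[OF isf_sesq[OF isf] pos_posf[OF pos] C(2) C(1) isf_dense[OF isf]] by blast
  have "(UNIV, g) \<in> Vf H" using UNIV_isf[OF g(1)] UNIV_pos[OF g(2)] by (simp add: Vf_def)
  then show ?thesis using UNIV_fb[OF g(3)] g(4) by (intro exI[of _ "(UNIV, g)"]) auto
qed

lemma CONT:
  assumes t1: "t1 \<in> Vf H" "fdom t1 = UNIV" "form_bounded H t1"
    and t2: "t2 \<in> Vf H" "fdom t2 = UNIV" "form_bounded H t2"
    and dn: "dense_in H S" and le: "\<forall>v\<in>S. Re (fval t1 v v) \<le> Re (fval t2 v v)"
  shows "Re (fval t1 v v) \<le> Re (fval t2 v v)"
proof -
  obtain a where a: "\<And>x n. a x n \<in> S" "\<And>x n. nrm (x - a x n) < inverse (real (Suc n))"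
    using dense_seq[OF dn] by blast
  have at: "(\<lambda>n. nrm (a v n - v)) \<longlonglongrightarrow> 0" using seq_to0 a(2) by blast
  have lim1: "(\<lambda>n. fval t (a v n) (a v n)) \<longlonglongrightarrow> fval t v v"
    if t: "t \<in> Vf H" "fdom t = UNIV" "form_bounded H t" for t
  proof -
    obtain C where C: "0 \<le> C" "bnd (fdom t) (fval t) C"
      using fb_bnd[OF Vf_isf[OF t(1)] Vf_pos[OF t(1)] t(3)] by blast
    have sq: "sesq UNIV (fval t)" using isf_sesq[OF Vf_isf[OF t(1)]] t(2) by simp
    have ps: "posf UNIV (fval t)" using pos_posf[OF Vf_pos[OF t(1)]] t(2) by simp
    show ?thesis
      by (rule CONV[OF sq ps C(2)[unfolded t(2)] C(1)]) (use at in auto)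
  qed
  have "(\<lambda>n. Re (fval t1 (a v n) (a v n))) \<longlonglongrightarrow> Re (fval t1 v v)" by (intro tendsto_Re lim1 t1)
  moreover have "(\<lambda>n. Re (fval t2 (a v n) (a v n))) \<longlonglongrightarrow> Re (fval t2 v v)" by (intro tendsto_Re lim1 t2)
  ultimately show ?thesis by (rule LIMSEQ_le) (use le a(1) in auto)
qed

lemma LIM:
  assumes sub: "lin_subspace H S" and dn: "dense_in H S"
    and X: "\<And>n. X n \<in> Vf H" and Sd: "\<And>n. S \<subseteq> fdom (X n)"
    and cv: "\<And>v. v \<in> S \<Longrightarrow> convergent (\<lambda>n. Re (fval (X n) v v))"
  shows "is_form H (limf X S) \<and> form_positive (limf X S) \<and> fdom (limf X S) = S \<and>
    (\<forall>v\<in>S. (\<lambda>n. Re (fval (X n) v v)) \<longlonglongrightarrow> Re (fval (limf X S) v v))"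
proof -
  have sqn: "sesq S (fval (X n))" for n by (rule sesq_mono[OF isf_sesq[OF Vf_isf[OF X]] sub Sd])
  have psn: "Im (fval (X n) v v) = 0" "0 \<le> Re (fval (X n) v v)" if "v \<in> S" for n v
    using pos_posf[OF Vf_pos[OF X]] Sd that unfolding posf_def by blast+
  have dconv: "convergent (\<lambda>n. fval (X n) v v)" if v: "v \<in> S" for v
  proof -
    obtain l where l: "(\<lambda>n. Re (fval (X n) v v)) \<longlonglongrightarrow> l" using cv[OF v] by (auto simp: convergent_def)
    have "(\<lambda>n. complex_of_real (Re (fval (X n) v v))) \<longlonglongrightarrow> of_real l" by (intro tendsto_of_real l)
    moreover have "(\<lambda>n. complex_of_real (Re (fval (X n) v v))) = (\<lambda>n. fval (X n) v v)"
      using psn[OF v] by (simp add: complex_eq_iff fun_eq_iff)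
    ultimately show ?thesis by (auto simp: convergent_def)
  qed
  have xconv: "convergent (\<lambda>n. fval (X n) x y)" if xy: "x \<in> S" "y \<in> S" for x y
  proof -
    have w: "x + y \<in> S" "x + sm (-1) y \<in> S" "x + sm \<i> y \<in> S" "x + sm (-\<i>) y \<in> S"
      using xy subsp_add[OF sub] subsp_sm[OF sub] by auto
    obtain l1 where l1: "(\<lambda>n. fval (X n) (x + y) (x + y)) \<longlonglongrightarrow> l1" using dconv[OF w(1)] by (auto simp: convergent_def)
    obtain l2 where l2: "(\<lambda>n. fval (X n) (x + sm (-1) y) (x + sm (-1) y)) \<longlonglongrightarrow> l2" using dconv[OF w(2)] by (auto simp: convergent_def)
    obtain l3 where l3: "(\<lambda>n. fval (X n) (x + sm \<i> y) (x + sm \<i> y)) \<longlonglongrightarrow> l3" using dconv[OF w(3)] by (auto simp: convergent_def)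
    obtain l4 where l4: "(\<lambda>n. fval (X n) (x + sm (-\<i>) y) (x + sm (-\<i>) y)) \<longlonglongrightarrow> l4" using dconv[OF w(4)] by (auto simp: convergent_def)
    have "(\<lambda>n. (fval (X n) (x + y) (x + y) - fval (X n) (x + sm (-1) y) (x + sm (-1) y)
          + \<i> * fval (X n) (x + sm \<i> y) (x + sm \<i> y) - \<i> * fval (X n) (x + sm (-\<i>) y) (x + sm (-\<i>) y)) / 4)
       \<longlonglongrightarrow> (l1 - l2 + \<i> * l3 - \<i> * l4) / 4"
      by (intro tendsto_intros l1 l2 l3 l4) simp
    moreover have "(\<lambda>n. (fval (X n) (x + y) (x + y) - fval (X n) (x + sm (-1) y) (x + sm (-1) y)
          + \<i> * fval (X n) (x + sm \<i> y) (x + sm \<i> y) - \<i> * fval (X n) (x + sm (-\<i>) y) (x + sm (-\<i>) y)) / 4)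
       = (\<lambda>n. fval (X n) x y)"
      using polar[OF sqn xy] by (simp add: fun_eq_iff)
    ultimately show ?thesis by (auto simp: convergent_def)
  qed
  define L where "L x y = lim (\<lambda>n. fval (X n) x y)" for x y
  have TL: "(\<lambda>n. fval (X n) x y) \<longlonglongrightarrow> L x y" if "x \<in> S" "y \<in> S" for x y
    using xconv[OF that] by (simp add: L_def convergent_LIMSEQ_iff)
  have fv: "fval (limf X S) x y = (if x \<in> S \<and> y \<in> S then L x y else 0)" for x y
    by (simp add: limf_def L_def)
  have fd: "fdom (limf X S) = S" by (simp add: limf_def)
  have a1: "L (x + y) z = L x z + L y z" if "x \<in> S" "y \<in> S" "z \<in> S" for x y z
  proof -
    have "(\<lambda>n. fval (X n) (x + y) z) = (\<lambda>n. fval (X n) x z + fval (X n) y z)"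
      using sq_addl[OF sqn that] by simp
    moreover have "(\<lambda>n. fval (X n) (x + y) z) \<longlonglongrightarrow> L (x + y) z" using TL subsp_add[OF sub] that by blast
    ultimately have "(\<lambda>n. fval (X n) x z + fval (X n) y z) \<longlonglongrightarrow> L (x + y) z" by simp
    moreover have "(\<lambda>n. fval (X n) x z + fval (X n) y z) \<longlonglongrightarrow> L x z + L y z" using that by (intro tendsto_add TL)
    ultimately show ?thesis by (rule LIMSEQ_unique)
  qed
  have a2: "L x (y + z) = L x y + L x z" if "x \<in> S" "y \<in> S" "z \<in> S" for x y z
  proof -
    have "(\<lambda>n. fval (X n) x (y + z)) = (\<lambda>n. fval (X n) x y + fval (X n) x z)"
      using sq_addr[OF sqn that] by simp
    moreover have "(\<lambda>n. fval (X n) x (y + z)) \<longlonglongrightarrow> L x (y + z)" using TL subsp_add[OF sub] that by blast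
    ultimately have "(\<lambda>n. fval (X n) x y + fval (X n) x z) \<longlonglongrightarrow> L x (y + z)" by simp
    moreover have "(\<lambda>n. fval (X n) x y + fval (X n) x z) \<longlonglongrightarrow> L x y + L x z" using that by (intro tendsto_add TL)
    ultimately show ?thesis by (rule LIMSEQ_unique)
  qed
  have a3: "L (sm c x) y = c * L x y" if "x \<in> S" "y \<in> S" for c x y
  proof -
    have "(\<lambda>n. fval (X n) (sm c x) y) = (\<lambda>n. c * fval (X n) x y)"
      using sq_sml[OF sqn that] by simp
    moreover have "(\<lambda>n. fval (X n) (sm c x) y) \<longlonglongrightarrow> L (sm c x) y" using TL subsp_sm[OF sub] that by blast
    ultimately have "(\<lambda>n. c * fval (X n) x y) \<longlonglongrightarrow> L (sm c x) y" by simp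
    moreover have "(\<lambda>n. c * fval (X n) x y) \<longlonglongrightarrow> c * L x y" using that by (intro tendsto_mult tendsto_const TL)
    ultimately show ?thesis by (rule LIMSEQ_unique)
  qed
  have a4: "L x (sm c y) = cnj c * L x y" if "x \<in> S" "y \<in> S" for c x y
  proof -
    have "(\<lambda>n. fval (X n) x (sm c y)) = (\<lambda>n. cnj c * fval (X n) x y)"
      using sq_smr[OF sqn that] by simp
    moreover have "(\<lambda>n. fval (X n) x (sm c y)) \<longlonglongrightarrow> L x (sm c y)" using TL subsp_sm[OF sub] that by blast
    ultimately have "(\<lambda>n. cnj c * fval (X n) x y) \<longlonglongrightarrow> L x (sm c y)" by simp
    moreover have "(\<lambda>n. cnj c * fval (X n) x y) \<longlonglongrightarrow> cnj c * L x y" using that by (intro tendsto_mult tendsto_const TL)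
    ultimately show ?thesis by (rule LIMSEQ_unique)
  qed
  have isf: "is_form H (limf X S)"
    unfolding is_form_def fd
    using sub dn a1 a2 a3 a4 subsp_add[OF sub] subsp_sm[OF sub] by (simp add: fv)
  have ReT: "(\<lambda>n. Re (fval (X n) v v)) \<longlonglongrightarrow> Re (fval (limf X S) v v)" if v: "v \<in> S" for v
    using tendsto_Re[OF TL[OF v v]] v by (simp add: fv)
  have pos: "form_positive (limf X S)"
    unfolding form_positive_def fd
  proof (intro ballI conjI)
    fix v assume v: "v \<in> S"
    have "(\<lambda>n. Im (fval (X n) v v)) \<longlonglongrightarrow> Im (fval (limf X S) v v)"
      using tendsto_Im[OF TL[OF v v]] v by (simp add: fv)
    then show "Im (fval (limf X S) v v) = 0" using psn[OF v] by (simp add: LIMSEQ_const_iff)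
    show "0 \<le> Re (fval (limf X S) v v)"
      by (rule LIMSEQ_le_const[OF ReT[OF v]]) (use psn[OF v] in auto)
  qed
  show ?thesis using isf pos fd ReT by blast
qed

lemma fb_le:
  assumes "\<forall>v\<in>fdom t. Re (fval t v v) \<le> Re (fval u v v)" "fdom t \<subseteq> fdom u" "form_bounded H u"
  shows "form_bounded H t"
proof -
  obtain C where C: "\<forall>x\<in>fdom u. nrm x = 1 \<longrightarrow> Re (fval u x x) \<le> C"
    using assms(3) by (auto simp: form_bounded_def)
  have "\<forall>x\<in>fdom t. nrm x = 1 \<longrightarrow> Re (fval t x x) \<le> C"
    using assms(1,2) C by force
  then show ?thesis by (auto simp: form_bounded_def)
qed

lemma fb_sum:
  assumes "form_bounded H s" "form_bounded H t"
  shows "form_bounded H (form_add s t)"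
proof -
  obtain C1 where C1: "\<forall>x\<in>fdom s. nrm x = 1 \<longrightarrow> Re (fval s x x) \<le> C1"
    using assms(1) by (auto simp: form_bounded_def)
  obtain C2 where C2: "\<forall>x\<in>fdom t. nrm x = 1 \<longrightarrow> Re (fval t x x) \<le> C2"
    using assms(2) by (auto simp: form_bounded_def)
  have "\<forall>x\<in>fdom (form_add s t). nrm x = 1 \<longrightarrow> Re (fval (form_add s t) x x) \<le> C1 + C2"
    using C1 C2 by (auto simp: fval_add intro: add_mono)
  then show ?thesis unfolding form_bounded_def by blast
qed

lemma fb_part:
  assumes "is_form H s" "form_positive s" "fdom t \<subseteq> fdom s" "form_bounded H (form_add s t)"
  shows "form_bounded H t"
proof (rule fb_le[OF _ _ assms(4)])
  show "fdom t \<subseteq> fdom (form_add s t)" using assms(3) by auto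
  show "\<forall>v\<in>fdom t. Re (fval t v v) \<le> Re (fval (form_add s t) v v)"
    using assms(3) pos_Re'[OF assms(1,2)] by (auto simp: fval_add)
qed

lemma add_isf:
  assumes t: "is_form H t" and s: "is_form H s" and dn: "dense_in H (fdom t \<inter> fdom s)"
  shows "is_form H (form_add t s)"
proof -
  have st: "sesq (fdom t) (fval t)" "sesq (fdom s) (fval s)" using isf_sesq t s by auto
  have sub: "lin_subspace H (fdom t \<inter> fdom s)"
    using sq_sub[OF st(1)] sq_sub[OF st(2)] unfolding lin_subspace_def by auto
  show ?thesis
    unfolding is_form_def fdom_add
    using sub dn subsp_add[OF sub] subsp_sm[OF sub]
      sq_addl[OF st(1)] sq_addl[OF st(2)] sq_addr[OF st(1)] sq_addr[OF st(2)]
      sq_sml[OF st(1)] sq_sml[OF st(2)] sq_smr[OF st(1)] sq_smr[OF st(2)]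
    by (simp add: fval_add algebra_simps)
qed

lemma add_Vf:
  assumes t: "t \<in> Vf H" and s: "s \<in> Vf H"
    and c: "form_bounded H t \<or> form_bounded H s \<or> fdom t = fdom s"
  shows "form_add t s \<in> Vf H"
proof -
  have it: "is_form H t" "form_positive t" using t by (auto simp: Vf_def)
  have is': "is_form H s" "form_positive s" using s by (auto simp: Vf_def)
  have dn: "dense_in H (fdom t \<inter> fdom s)"
    using c Vf_bdom[OF t] Vf_bdom[OF s] isf_dense[OF it(1)] isf_dense[OF is'(1)] by auto
  have isf: "is_form H (form_add t s)" by (rule add_isf[OF it(1) is'(1) dn])
  have pos: "form_positive (form_add t s)"
    using it(2) is'(2) unfolding form_positive_def by (auto simp: fval_add)
  have "fdom (form_add t s) = UNIV" if fb: "form_bounded H (form_add t s)"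
  proof -
    consider "form_bounded H t" | "form_bounded H s" | "fdom t = fdom s" using c by blast
    then show ?thesis
    proof cases
      case 1
      then have "fdom t = UNIV" using Vf_bdom[OF t] by blast
      then have "form_bounded H s" using fb_part[OF it(1) it(2) _ fb] by simp
      then show ?thesis using Vf_bdom[OF s] \<open>fdom t = UNIV\<close> by simp
    next
      case 2
      then have "fdom s = UNIV" using Vf_bdom[OF s] by blast
      then have "form_bounded H t" using fb_part[OF is'(1) is'(2) _ fb[unfolded form_add_comm[of t s]]] by simp
      then show ?thesis using Vf_bdom[OF t] \<open>fdom s = UNIV\<close> by simp
    next
      case 3
      then have "form_bounded H s" using fb_part[OF it(1) it(2) _ fb] by simp
      then show ?thesis using Vf_bdom[OF s] 3 by simp
    qed
  qed
  then show ?thesis using isf pos by (simp add: Vf_def)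
qed

lemma dform_isf:
  assumes y: "is_form H y" and x: "is_form H x" and sub: "fdom y \<subseteq> fdom x"
  shows "is_form H (dform y x)"
proof -
  have st: "sesq (fdom y) (fval y)" "sesq (fdom x) (fval x)" using isf_sesq y x by auto
  have sy: "lin_subspace H (fdom y)" by (rule sq_sub[OF st(1)])
  have sx: "sesq (fdom y) (fval x)" by (rule sesq_mono[OF st(2) sy sub])
  show ?thesis
    unfolding is_form_def dform_def fdom_pair fval_pair
    using sy isf_dense[OF y] subsp_add[OF sy] subsp_sm[OF sy]
      sq_addl[OF st(1)] sq_addl[OF sx] sq_addr[OF st(1)] sq_addr[OF sx]
      sq_sml[OF st(1)] sq_sml[OF sx] sq_smr[OF st(1)] sq_smr[OF sx]
    by (simp add: algebra_simps)
qed

lemma dform_pos: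
  assumes "form_positive y" "form_positive x" "fdom y \<subseteq> fdom x"
    "\<forall>v\<in>fdom y. Re (fval x v v) \<le> Re (fval y v v)"
  shows "form_positive (dform y x)"
  using assms unfolding form_positive_def dform_def by auto

lemma dform_le: "\<forall>v\<in>fdom (dform y x). Re (fval (dform y x) v v) \<le> Re (fval y v v)"
  if "is_form H x" "form_positive x"
  using pos_Re'[OF that] by (simp add: dform_def)

lemma add_dform:
  assumes y: "is_form H y" and sub: "fdom y \<subseteq> fdom x"
  shows "form_add x (dform y x) = y"
proof (rule form_eqI)
  show "fdom (form_add x (dform y x)) = fdom y" using sub by (auto simp: dform_def)
  show "fval (form_add x (dform y x)) = fval y"
    using sub isf_norm[OF y] by (auto simp: fun_eq_iff fval_add dform_def)
qed

lemma add_ext: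
  assumes y: "is_form H y" and dx: "fdom x = fdom y" and t: "fdom t' = UNIV"
    and ag: "\<forall>a\<in>fdom y. \<forall>b\<in>fdom y. fval t' a b = fval (dform y x) a b"
  shows "form_add x t' = y"
proof (rule form_eqI)
  show "fdom (form_add x t') = fdom y" using dx t by auto
  show "fval (form_add x t') = fval y"
    using ag dx t isf_norm[OF y] by (auto simp: fun_eq_iff fval_add dform_def)
qed

context
  fixes D assumes Dsub: "lin_subspace H D" and Ddn: "dense_in H D"
begin

lemma Q_Vf: "t \<in> VfD H D \<Longrightarrow> t \<in> Vf H" by (simp add: VfD_def)
lemma Q_bdom: "t \<in> VfD H D \<Longrightarrow> form_bounded H t \<Longrightarrow> fdom t = UNIV"
  by (simp add: VfD_def Vf_def)
lemma Q_udom: "t \<in> VfD H D \<Longrightarrow> \<not> form_bounded H t \<Longrightarrow> fdom t = D"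
  by (simp add: VfD_def)
lemma Q_D: "t \<in> VfD H D \<Longrightarrow> D \<subseteq> fdom t"
  using Q_bdom Q_udom by blast
lemma Q_I: "t \<in> Vf H \<Longrightarrow> form_bounded H t \<or> fdom t = D \<Longrightarrow> t \<in> VfD H D"
  by (simp add: VfD_def)

lemma op_Some: "restrict_op (Vf_oplus H) (VfD H D) x z = Some y \<longleftrightarrow>
   Vf_oplus H x z = Some y \<and> y \<in> VfD H D"
  by (auto simp: restrict_op_def split: option.splits)

lemma ORD:
  assumes x: "x \<in> VfD H D" and y: "y \<in> VfD H D"
  shows "gea_le (VfD H D) (restrict_op (Vf_oplus H) (VfD H D)) x y \<longleftrightarrow>
         (\<forall>v\<in>fdom y. Re (fval x v v) \<le> Re (fval y v v))"
proof
  assume "gea_le (VfD H D) (restrict_op (Vf_oplus H) (VfD H D)) x y"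
  then obtain z where z: "z \<in> VfD H D" "Vf_oplus H x z = Some y"
    by (auto simp: gea_le_def op_Some)
  then have yz: "y = form_add x z" by (auto simp: Vf_oplus_def split: if_splits)
  have "0 \<le> Re (fval z v v)" for v using pos_Re'[OF Vf_isf Vf_pos] Q_Vf[OF z(1)] by blast
  then show "\<forall>v\<in>fdom y. Re (fval x v v) \<le> Re (fval y v v)"
    by (auto simp: yz fval_add)
next
  assume le: "\<forall>v\<in>fdom y. Re (fval x v v) \<le> Re (fval y v v)"
  have xV: "x \<in> Vf H" and yV: "y \<in> Vf H" using x y Q_Vf by auto
  have xi: "is_form H x" "form_positive x" using xV by (auto simp: Vf_def)
  have yi: "is_form H y" "form_positive y" using yV by (auto simp: Vf_def)
  show "gea_le (VfD H D) (restrict_op (Vf_oplus H) (VfD H D)) x y"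
  proof (cases "form_bounded H y")
    case bY: True
    have dy: "fdom y = UNIV" using Q_bdom[OF y bY] .
    have bx: "form_bounded H x" by (rule fb_le[OF _ _ bY]) (use le dy in auto)
    have dx: "fdom x = UNIV" using Q_bdom[OF x bx] .
    let ?z = "dform y x"
    have zi: "is_form H ?z" by (rule dform_isf[OF yi(1) xi(1)]) (simp add: dx)
    have zp: "form_positive ?z" by (rule dform_pos[OF yi(2) xi(2)]) (use le dx in auto)
    have bz: "form_bounded H ?z"
      by (rule fb_le[OF dform_le[OF xi] _ bY]) (simp add: dform_def)
    have zV: "?z \<in> Vf H" using zi zp dy by (simp add: Vf_def dform_def)
    have zQ: "?z \<in> VfD H D" using Q_I[OF zV] bz by blast
    have "Vf_oplus H x ?z = Some y" using bx add_dform[OF yi(1)] dx by (simp add: Vf_oplus_def)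
    then show ?thesis using zQ y by (auto simp: gea_le_def op_Some)
  next
    case ny: False
    have dy: "fdom y = D" using Q_udom[OF y ny] .
    have sub: "fdom y \<subseteq> fdom x" using Q_D[OF x] dy by simp
    let ?z = "dform y x"
    have zi: "is_form H ?z" by (rule dform_isf[OF yi(1) xi(1) sub])
    have zp: "form_positive ?z" by (rule dform_pos[OF yi(2) xi(2) sub le])
    have dz: "fdom ?z = D" using dy by (simp add: dform_def)
    show ?thesis
    proof (cases "form_bounded H ?z")
      case False
      have zV: "?z \<in> Vf H" using zi zp False by (simp add: Vf_def)
      have zQ: "?z \<in> VfD H D" using Q_I[OF zV] dz by blast
      have c: "form_bounded H x \<or> fdom x = fdom ?z" using Q_udom[OF x] dz by blast
      have "Vf_oplus H x ?z = Some y" using c add_dform[OF yi(1) sub] by (auto simp: Vf_oplus_def)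
      then show ?thesis using zQ y by (auto simp: gea_le_def op_Some)
    next
      case bz: True
      have nx: "\<not> form_bounded H x"
      proof
        assume "form_bounded H x"
        then have "form_bounded H (form_add x ?z)" using fb_sum bz by blast
        then show False using add_dform[OF yi(1) sub] ny by simp
      qed
      have dx: "fdom x = fdom y" using Q_udom[OF x nx] dy by simp
      obtain t' where t': "t' \<in> Vf H" "fdom t' = UNIV" "form_bounded H t'"
        "\<forall>a\<in>fdom ?z. \<forall>b\<in>fdom ?z. fval t' a b = fval ?z a b"
        using EXT_form[OF zi zp bz] by blast
      have tQ: "t' \<in> VfD H D" using Q_I[OF t'(1)] t'(3) by blast
      have "form_add x t' = y" by (rule add_ext[OF yi(1) dx t'(2)]) (use t'(4) in \<open>simp add: dform_def\<close>)
      then have "Vf_oplus H x t' = Some y" using t'(3) by (simp add: Vf_oplus_def)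
      then show ?thesis using tQ y by (auto simp: gea_le_def op_Some)
    qed
  qed
qed

lemma cl1:
  assumes x: "x \<in> VfD H D" and y: "y \<in> VfD H D" and w: "form_add x y \<in> Vf H"
  shows "form_add x y \<in> VfD H D"
proof (cases "fdom (form_add x y) = D")
  case True then show ?thesis using Q_I[OF w] by blast
next
  case False
  have bx: "form_bounded H x"
  proof (rule ccontr)
    assume "\<not> form_bounded H x"
    then have "fdom x = D" using Q_udom[OF x] by blast
    then have "fdom (form_add x y) = D" using Q_D[OF y] by auto
    then show False using False by blast
  qed
  have bY: "form_bounded H y"
  proof (rule ccontr)
    assume "\<not> form_bounded H y"
    then have "fdom y = D" using Q_udom[OF y] by blast
    then have "fdom (form_add x y) = D" using Q_D[OF x] by auto
    then show False using False by blast
  qed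
  show ?thesis using Q_I[OF w] fb_sum[OF bx bY] by blast
qed

lemma cl2:
  assumes x: "x \<in> VfD H D" and y: "y \<in> Vf H"
    and c: "form_bounded H x \<or> form_bounded H y \<or> fdom x = fdom y"
    and w: "form_add x y \<in> VfD H D"
  shows "y \<in> VfD H D"
proof (cases "form_bounded H y")
  case True then show ?thesis using Q_I[OF y] by blast
next
  case nY: False
  show ?thesis
  proof (cases "form_bounded H x")
    case True
    have dx: "fdom x = UNIV" using Q_bdom[OF x True] .
    have xi: "is_form H x" "form_positive x" using Q_Vf[OF x] by (auto simp: Vf_def)
    have "\<not> form_bounded H (form_add x y)"
      using fb_part[OF xi, of y] dx nY by auto
    then have "fdom (form_add x y) = D" using Q_udom[OF w] by blast
    then show ?thesis using dx Q_I[OF y] by simp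
  next
    case False
    then show ?thesis using c nY Q_udom[OF x] Q_I[OF y] by auto
  qed
qed

lemma zero_Vf: "zero_form \<in> Vf H" "form_bounded H zero_form"
proof -
  have sq: "sesq UNIV (\<lambda>x y. 0)" by (simp add: sesq_def subsp_UNIV)
  have "posf UNIV (\<lambda>x y. 0)" by (simp add: posf_def)
  moreover have "bnd UNIV (\<lambda>x y. 0) 0" by (simp add: bnd_def)
  ultimately show "zero_form \<in> Vf H" "form_bounded H zero_form"
    using UNIV_isf[OF sq] UNIV_pos UNIV_fb by (auto simp: Vf_def zero_form_def)
qed

lemma part_sub_gea: "sub_gea (Vf H) (Vf_oplus H) zero_form (VfD H D)"
  unfolding sub_gea_def
proof (intro conjI ballI impI)
  show "VfD H D \<subseteq> Vf H" using Q_Vf by blast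
  show "zero_form \<in> VfD H D" using Q_I zero_Vf by blast
  fix x y w assume xV: "x \<in> Vf H" and yV: "y \<in> Vf H" and wV: "w \<in> Vf H"
    and op: "Vf_oplus H x y = Some w"
    and two: "x \<in> VfD H D \<and> y \<in> VfD H D \<or> x \<in> VfD H D \<and> w \<in> VfD H D \<or> y \<in> VfD H D \<and> w \<in> VfD H D"
  have c: "form_bounded H x \<or> form_bounded H y \<or> fdom x = fdom y" and wd: "w = form_add x y"
    using op by (auto simp: Vf_oplus_def split: if_splits)
  have c': "form_bounded H y \<or> form_bounded H x \<or> fdom y = fdom x" using c by auto
  have wd': "w = form_add y x" using wd form_add_comm by metis
  have "x \<in> VfD H D \<and> y \<in> VfD H D \<and> w \<in> VfD H D"
    using two
  proof (elim disjE conjE)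
    assume "x \<in> VfD H D" "y \<in> VfD H D"
    then show ?thesis using cl1 wV wd by blast
  next
    assume "x \<in> VfD H D" "w \<in> VfD H D"
    then show ?thesis using cl2[OF _ yV c] wd by blast
  next
    assume "y \<in> VfD H D" "w \<in> VfD H D"
    then show ?thesis using cl2[OF _ xV c'] wd' by blast
  qed
  then show "x \<in> VfD H D" "y \<in> VfD H D" "w \<in> VfD H D" by auto
qed

lemma part_total: "op_total (VfD H D) (restrict_op (Vf_oplus H) (VfD H D))"
  unfolding op_total_def
proof (intro ballI)
  fix x y assume x: "x \<in> VfD H D" and y: "y \<in> VfD H D"
  have "\<not> form_bounded H x \<Longrightarrow> \<not> form_bounded H y \<Longrightarrow> fdom x = fdom y"
    using Q_udom[OF x] Q_udom[OF y] by simp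
  then have c: "form_bounded H x \<or> form_bounded H y \<or> fdom x = fdom y" by blast
  have "form_add x y \<in> Vf H" by (rule add_Vf[OF Q_Vf[OF x] Q_Vf[OF y] c])
  then have "form_add x y \<in> VfD H D" using cl1[OF x y] by blast
  then show "restrict_op (Vf_oplus H) (VfD H D) x y \<noteq> None"
    using c by (simp add: restrict_op_def Vf_oplus_def)
qed

abbreviation "QQ \<equiv> VfD H D"
abbreviation "OP \<equiv> restrict_op (Vf_oplus H) (VfD H D)"

lemma part_up: "monotone_dedekind_up_sigma_complete QQ OP"
  unfolding monotone_dedekind_up_sigma_complete_def
proof (intro allI impI)
  fix X assume asm: "(\<forall>n. X n \<in> QQ) \<and> (\<forall>n. gea_le QQ OP (X n) (X (Suc n))) \<and> (\<exists>u\<in>QQ. \<forall>n. gea_le QQ OP (X n) u)"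
  then have XQ: "\<And>n. X n \<in> QQ" by blast
  obtain u where u: "u \<in> QQ" "\<And>n. gea_le QQ OP (X n) u" using asm by blast
  have XV: "\<And>n. X n \<in> Vf H" using XQ Q_Vf by blast
  have inc: "Re (fval (X n) v v) \<le> Re (fval (X (Suc n)) v v)" if "v \<in> fdom (X (Suc n))" for n v
    using asm ORD[OF XQ XQ] that by blast
  have ubd: "Re (fval (X n) v v) \<le> Re (fval u v v)" if "v \<in> fdom u" for n v
    using u ORD[OF XQ u(1)] that by blast
  have incs: "incseq (\<lambda>n. Re (fval (X n) v v))" if v: "v \<in> D" for v
    by (rule incseq_SucI) (use inc Q_D[OF XQ] v in blast)
  have cv: "convergent (\<lambda>n. Re (fval (X n) v v))" if v: "v \<in> D" for v
  proof -
    have "\<forall>n. Re (fval (X n) v v) \<le> Re (fval u v v)" using ubd Q_D[OF u(1)] v by blast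
    then obtain L where "(\<lambda>n. Re (fval (X n) v v)) \<longlonglongrightarrow> L" using incseq_convergent[OF incs[OF v]] by blast
    then show ?thesis by (auto simp: convergent_def)
  qed
  define l where "l = limf X D"
  have L: "is_form H l \<and> form_positive l \<and> fdom l = D \<and> (\<forall>v\<in>D. (\<lambda>n. Re (fval (X n) v v)) \<longlonglongrightarrow> Re (fval l v v))"
    unfolding l_def by (rule LIM[OF Dsub Ddn XV Q_D[OF XQ] cv])
  then have li: "is_form H l" and lp: "form_positive l" and ld: "fdom l = D"
    and lT: "\<And>v. v \<in> D \<Longrightarrow> (\<lambda>n. Re (fval (X n) v v)) \<longlonglongrightarrow> Re (fval l v v)" by auto
  have le_l: "Re (fval (X n) v v) \<le> Re (fval l v v)" if "v \<in> D" for n v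
    by (rule incseq_le[OF incs[OF that] lT[OF that]])
  have l_le: "Re (fval l v v) \<le> Re (fval w v v)"
    if w: "w \<in> QQ" "\<forall>n. gea_le QQ OP (X n) w" and v: "v \<in> D" for w v
  proof -
    have "\<forall>n. Re (fval (X n) v v) \<le> Re (fval w v v)" using w ORD[OF XQ w(1)] Q_D[OF w(1)] v by blast
    then show ?thesis by (intro LIMSEQ_le_const2[OF lT[OF v]]) auto
  qed
  show "\<exists>s. is_sup_in QQ OP X s"
  proof (cases "form_bounded H l")
    case False
    have lV: "l \<in> Vf H" using li lp False by (simp add: Vf_def)
    have lQ: "l \<in> QQ" using Q_I[OF lV] ld by blast
    have "is_sup_in QQ OP X l"
      unfolding is_sup_in_def
    proof (intro conjI allI ballI impI)
      show "l \<in> QQ" by (rule lQ)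
      fix n show "gea_le QQ OP (X n) l" using ORD[OF XQ lQ] le_l ld by auto
    next
      fix w assume w: "w \<in> QQ" "\<forall>n. gea_le QQ OP (X n) w"
      show "gea_le QQ OP l w" unfolding ORD[OF lQ w(1)]
      proof
        fix v assume v: "v \<in> fdom w"
        show "Re (fval l v v) \<le> Re (fval w v v)"
        proof (cases "v \<in> D")
          case True then show ?thesis using l_le w by blast
        next
          case False then have "fval l v v = 0" using isf_norm[OF li] ld by blast
          then show ?thesis using pos_Re'[OF Vf_isf[OF Q_Vf[OF w(1)]] Vf_pos[OF Q_Vf[OF w(1)]]] by simp
        qed
      qed
    qed
    then show ?thesis by blast
  next
    case True
    obtain s where s: "s \<in> Vf H" "fdom s = UNIV" "form_bounded H s"
      "\<forall>a\<in>fdom l. \<forall>b\<in>fdom l. fval s a b = fval l a b"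
      using EXT_form[OF li lp True] by blast
    have sQ: "s \<in> QQ" using Q_I[OF s(1)] s(3) by blast
    have sl: "fval s v v = fval l v v" if "v \<in> D" for v using s(4) ld that by blast
    have Xb: "form_bounded H (X n)" for n
    proof (rule ccontr)
      assume nb: "\<not> form_bounded H (X n)"
      then have dX: "fdom (X n) = D" using Q_udom[OF XQ] by blast
      have "form_bounded H (X n)" by (rule fb_le[OF _ _ True]) (use le_l dX ld in auto)
      with nb show False by blast
    qed
    have dXn: "fdom (X n) = UNIV" for n using Q_bdom[OF XQ Xb] .
    have "is_sup_in QQ OP X s"
      unfolding is_sup_in_def
    proof (intro conjI allI ballI impI)
      show "s \<in> QQ" by (rule sQ)
      fix n
      have "Re (fval (X n) v v) \<le> Re (fval s v v)" for v
        by (rule CONT[OF XV dXn Xb s(1) s(2) s(3) Ddn]) (use le_l sl in auto)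
      then show "gea_le QQ OP (X n) s" using ORD[OF XQ sQ] by auto
    next
      fix w assume w: "w \<in> QQ" "\<forall>n. gea_le QQ OP (X n) w"
      show "gea_le QQ OP s w" unfolding ORD[OF sQ w(1)]
      proof
        fix v assume v: "v \<in> fdom w"
        show "Re (fval s v v) \<le> Re (fval w v v)"
        proof (cases "form_bounded H w")
          case True
          show ?thesis
            by (rule CONT[OF s(1) s(2) s(3) Q_Vf[OF w(1)] Q_bdom[OF w(1) True] True Ddn])
              (use l_le[OF w] sl in auto)
        next
          case False
          then have "v \<in> D" using Q_udom[OF w(1)] v by blast
          then show ?thesis using l_le[OF w] sl by auto
        qed
      qed
    qed
    then show ?thesis by blast
  qed
qed

lemma part_down: "monotone_dedekind_down_sigma_complete QQ OP"
  unfolding monotone_dedekind_down_sigma_complete_def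
proof (intro allI impI)
  fix X assume asm: "(\<forall>n. X n \<in> QQ) \<and> (\<forall>n. gea_le QQ OP (X (Suc n)) (X n))"
  then have XQ: "\<And>n. X n \<in> QQ" by blast
  have XV: "\<And>n. X n \<in> Vf H" using XQ Q_Vf by blast
  have Xpos: "0 \<le> Re (fval (X n) v v)" for n v using pos_Re'[OF Vf_isf[OF XV] Vf_pos[OF XV]] .
  have dec: "Re (fval (X (Suc n)) v v) \<le> Re (fval (X n) v v)" if "v \<in> fdom (X n)" for n v
    using asm ORD[OF XQ XQ] that by blast
  have decs: "decseq (\<lambda>n. Re (fval (X n) v v))" if v: "v \<in> D" for v
    by (rule decseq_SucI) (use dec Q_D[OF XQ] v in blast)
  have cv: "convergent (\<lambda>n. Re (fval (X n) v v))" if v: "v \<in> D" for v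
  proof -
    have "\<forall>n. 0 \<le> Re (fval (X n) v v)" using Xpos by blast
    then obtain L where "(\<lambda>n. Re (fval (X n) v v)) \<longlonglongrightarrow> L" using decseq_convergent[OF decs[OF v]] by blast
    then show ?thesis by (auto simp: convergent_def)
  qed
  define l where "l = limf X D"
  have L: "is_form H l \<and> form_positive l \<and> fdom l = D \<and> (\<forall>v\<in>D. (\<lambda>n. Re (fval (X n) v v)) \<longlonglongrightarrow> Re (fval l v v))"
    unfolding l_def by (rule LIM[OF Dsub Ddn XV Q_D[OF XQ] cv])
  then have li: "is_form H l" and lp: "form_positive l" and ld: "fdom l = D"
    and lT: "\<And>v. v \<in> D \<Longrightarrow> (\<lambda>n. Re (fval (X n) v v)) \<longlonglongrightarrow> Re (fval l v v)" by auto
  have l_le: "Re (fval l v v) \<le> Re (fval (X n) v v)" if "v \<in> D" for n v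
    by (rule decseq_ge[OF decs[OF that] lT[OF that]])
  have le_l: "Re (fval w v v) \<le> Re (fval l v v)"
    if w: "w \<in> QQ" "\<forall>n. gea_le QQ OP w (X n)" and v: "v \<in> D" for w v
  proof -
    have "\<forall>n. Re (fval w v v) \<le> Re (fval (X n) v v)" using w ORD[OF w(1) XQ] Q_D[OF XQ] v by blast
    then show ?thesis by (intro LIMSEQ_le_const[OF lT[OF v]]) auto
  qed
  show "\<exists>s. is_inf_in QQ OP X s"
  proof (cases "form_bounded H l")
    case False
    have lV: "l \<in> Vf H" using li lp False by (simp add: Vf_def)
    have lQ: "l \<in> QQ" using Q_I[OF lV] ld by blast
    have "is_inf_in QQ OP X l"
      unfolding is_inf_in_def
    proof (intro conjI allI ballI impI)
      show "l \<in> QQ" by (rule lQ)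
      fix n show "gea_le QQ OP l (X n)" unfolding ORD[OF lQ XQ]
      proof
        fix v assume v: "v \<in> fdom (X n)"
        show "Re (fval l v v) \<le> Re (fval (X n) v v)"
        proof (cases "v \<in> D")
          case True then show ?thesis using l_le by blast
        next
          case False then have "fval l v v = 0" using isf_norm[OF li] ld by blast
          then show ?thesis using Xpos by simp
        qed
      qed
    next
      fix w assume w: "w \<in> QQ" "\<forall>n. gea_le QQ OP w (X n)"
      show "gea_le QQ OP w l" using ORD[OF w(1) lQ] le_l[OF w] ld by auto
    qed
    then show ?thesis by blast
  next
    case True
    obtain s where s: "s \<in> Vf H" "fdom s = UNIV" "form_bounded H s"
      "\<forall>a\<in>fdom l. \<forall>b\<in>fdom l. fval s a b = fval l a b"
      using EXT_form[OF li lp True] by blast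
    have sQ: "s \<in> QQ" using Q_I[OF s(1)] s(3) by blast
    have sl: "fval s v v = fval l v v" if "v \<in> D" for v using s(4) ld that by blast
    have "is_inf_in QQ OP X s"
      unfolding is_inf_in_def
    proof (intro conjI allI ballI impI)
      show "s \<in> QQ" by (rule sQ)
      fix n show "gea_le QQ OP s (X n)" unfolding ORD[OF sQ XQ]
      proof
        fix v assume v: "v \<in> fdom (X n)"
        show "Re (fval s v v) \<le> Re (fval (X n) v v)"
        proof (cases "form_bounded H (X n)")
          case True
          show ?thesis
            by (rule CONT[OF s(1) s(2) s(3) XV Q_bdom[OF XQ True] True Ddn])
              (use l_le sl in auto)
        next
          case False
          then have "v \<in> D" using Q_udom[OF XQ] v by blast
          then show ?thesis using l_le sl by auto
        qed
      qed
    next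
      fix w assume w: "w \<in> QQ" "\<forall>n. gea_le QQ OP w (X n)"
      have bw: "form_bounded H w"
      proof (rule ccontr)
        assume nb: "\<not> form_bounded H w"
        then have dw: "fdom w = D" using Q_udom[OF w(1)] by blast
        have "form_bounded H w" by (rule fb_le[OF _ _ True]) (use le_l[OF w] dw ld in auto)
        with nb show False by blast
      qed
      have "Re (fval w v v) \<le> Re (fval s v v)" for v
        by (rule CONT[OF Q_Vf[OF w(1)] Q_bdom[OF w(1) bw] bw s(1) s(2) s(3) Ddn])
          (use le_l[OF w] sl in auto)
      then show "gea_le QQ OP w s" using ORD[OF w(1) sQ] by auto
    qed
    then show ?thesis by blast
  qed
qed

end

end

theorem theorem5p7:
  fixes H :: "('a::ab_group_add) chs" and D :: "'a set"
  assumes "complex_hilbert_space H"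
    and "infinite_dimensional H"
    and "lin_subspace H D"
    and "dense_in H D"
  shows "sub_gea (Vf H) (Vf_oplus H) zero_form (VfD H D)
       \<and> op_total (VfD H D) (restrict_op (Vf_oplus H) (VfD H D))
       \<and> monotone_dedekind_up_sigma_complete (VfD H D) (restrict_op (Vf_oplus H) (VfD H D))
       \<and> monotone_dedekind_down_sigma_complete (VfD H D) (restrict_op (Vf_oplus H) (VfD H D))"
proof -
  interpret CH H by unfold_locales (rule assms(1))
  show ?thesis
    using part_sub_gea[OF assms(3,4)] part_total[OF assms(3,4)]
      part_up[OF assms(3,4)] part_down[OF assms(3,4)] by blast
qed

end
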